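(* Let $g\ge1$ be an integer. (1) There are exactly $8$ distinct geometric Apollonian super-packings (not identified under Euclidean motions) that are strongly integral and have divisor $g$. (2) The set of all ordered, oriented Descartes configurations $\mathcal D$ with $M_{\mathcal D}$ integral and with $\gcd$ of curvatures equal to $g$ is the union of exactly $384$ orbits of the super-Apollonian group $\mathcal A^S$.
   Context: Circles are taken in $\hat{\mathbb C}=\mathbb R^2\cup\{\infty\}$; lines count as circles. A Descartes configuration is a set of four mutually tangent circles with disjoint interiors; an ordered, oriented one carries an ordering of its circles and a total orientation (there are 48 such choices for each unordered configuration), with signed curvatures (reciprocal radius, negative when the interior is unbounded, $0$ for lines, all reversed for negative orientation). Its curvature-center coordinate matrix $M_{\mathcal D}$ is the $4\times3$ matrix with $i$-th row $(b_i,b_ix_i,b_iy_i)$, $b_i$ the signed curvature and $(x_i,y_i)$ the center of the $i$-th circle (for a line: $(0,n_x,n_y)$ with $n$ the unit normal pointing into the line's interior half-plane). Let $S_i$ be the $4\times4$ integer matrix equal to the identity except that row $i$ has $-1$ in position $i$ and $2$ elsewhere, $S_i^\perp=S_i^T$, and $\mathcal A^S=\langle S_1,\dots,S_4,S_1^\perp,\dots,S_4^\perp\rangle$ the super-Apollonian group, acting on ordered oriented Descartes configurations by left multiplication on their augmented curvature-center coordinate matrices (so $M_{U[\mathcal D]}=UM_{\mathcal D}$). The geometric super-packing generated by $\mathcal D$ is the set of circles of configurations in $\mathcal A^S[\mathcal D]$. It is strongly integral if $M_{\mathcal D}$ is integral for one (equivalently all) configurations in the orbit, and its divisor is the gcd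 of the curvatures of any configuration in it. *)

theory Defs
  imports "HOL-Analysis.Analysis"
begin

text \<open>Points of the extended plane: None is the point at infinity.\<close>
type_synonym ext_point = "complex option"

text \<open>OCirc c r True: circle with centre c, radius r, interior the open
  bounded disc; OCirc c r False: same circle, interior the complement of the closed disc
  (containing infinity).  OLine n d: the line of points z with z.n = d (n a unit normal),
  interior the open half-plane z.n > d, i.e. n points into the interior.\<close>
datatype ocircle = OCirc complex real bool | OLine complex real

fun wf_oc :: "ocircle \<Rightarrow> bool" where
  "wf_oc (OCirc c r b) = (r > 0)"
| "wf_oc (OLine n d) = (norm n = 1)"

fun oc_boundary :: "ocircle \<Rightarrow> ext_point set" where
  "oc_boundary (OCirc c r b) = Some ` sphere c r"
| "oc_boundary (OLine n d) = insert None (Some ` {z. Re (z * cnj n) = d})"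

fun oc_interior :: "ocircle \<Rightarrow> ext_point set" where
  "oc_interior (OCirc c r True) = Some ` ball c r"
| "oc_interior (OCirc c r False) = insert None (Some ` (- cball c r))"
| "oc_interior (OLine n d) = Some ` {z. Re (z * cnj n) > d}"

fun oc_reverse :: "ocircle \<Rightarrow> ocircle" where
  "oc_reverse (OCirc c r b) = OCirc c r (\<not> b)"
| "oc_reverse (OLine n d) = OLine (- n) (- d)"

fun oc_curv :: "ocircle \<Rightarrow> real" where
  "oc_curv (OCirc c r b) = (if b then 1 / r else - (1 / r))"
| "oc_curv (OLine n d) = 0"

fun cc_row :: "ocircle \<Rightarrow> real^3" where
  "cc_row (OCirc c r b) = (let k = oc_curv (OCirc c r b) in vector [k, k * Re c, k * Im c])"
| "cc_row (OLine n d) = vector [0, Re n, Im n]"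

text \<open>Augmented curvature-center coordinates (bbar, b, b x, b y), bbar the signed curvature
  of the image under inversion in the unit circle: bbar = b |c|^2 - 1/b for circles,
  bbar = 2 d for the line z.n = d.\<close>
fun aug_row :: "ocircle \<Rightarrow> real^4" where
  "aug_row (OCirc c r b) = (let k = oc_curv (OCirc c r b) in
      vector [k * (norm c)\<^sup>2 - 1 / k, k, k * Re c, k * Im c])"
| "aug_row (OLine n d) = vector [2 * d, 0, Re n, Im n]"

type_synonym config = "4 \<Rightarrow> ocircle"

definition tangent :: "ocircle \<Rightarrow> ocircle \<Rightarrow> bool" where
  "tangent A B \<longleftrightarrow> (\<exists>!p. p \<in> oc_boundary A \<and> p \<in> oc_boundary B)"

definition pos_descartes :: "config \<Rightarrow> bool" where
  "pos_descartes D \<longleftrightarrow> (\<forall>i. wf_oc (D i)) \<and>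
     (\<forall>i j. i \<noteq> j \<longrightarrow> tangent (D i) (D j) \<and> oc_interior (D i) \<inter> oc_interior (D j) = {})"

definition oo_descartes :: "config \<Rightarrow> bool" where
  "oo_descartes D \<longleftrightarrow> pos_descartes D \<or> pos_descartes (oc_reverse \<circ> D)"

definition M_mat :: "config \<Rightarrow> real^3^4" where
  "M_mat D = (\<chi> i. cc_row (D i))"

definition W_mat :: "config \<Rightarrow> real^4^4" where
  "W_mat D = (\<chi> i. aug_row (D i))"

definition strongly_integral :: "config \<Rightarrow> bool" where
  "strongly_integral D \<longleftrightarrow> (\<forall>i j. M_mat D $ i $ j \<in> \<int>)"

definition divisor :: "config \<Rightarrow> int" where
  "divisor D = Gcd ((\<lambda>i. \<lfloor>oc_curv (D i)\<rfloor>) ` UNIV)"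

definition S_mat :: "4 \<Rightarrow> real^4^4" where
  "S_mat i = (\<chi> r c. if r = i then (if c = i then -1 else 2) else (if r = c then 1 else 0))"

inductive_set superA :: "(real^4^4) set" where
  gen: "S_mat i \<in> superA"
| gen_perp: "transpose (S_mat i) \<in> superA"
| one: "mat 1 \<in> superA"
| mult: "U \<in> superA \<Longrightarrow> V \<in> superA \<Longrightarrow> U ** V \<in> superA"
| inv: "U \<in> superA \<Longrightarrow> matrix_inv U \<in> superA"

definition superA_orbit :: "config \<Rightarrow> config set" where
  "superA_orbit D = {D'. oo_descartes D' \<and> (\<exists>U\<in>superA. W_mat D' = U ** W_mat D)}"

definition super_packing :: "config \<Rightarrow> ext_point set set" where
  "super_packing D = {oc_boundary (D' i) | D' i. D' \<in> superA_orbit D}"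

end

theory Submission
  imports Defs
begin


lemma v4 [simp]: "(vector [a,b,c,d] :: real^4) $ 1 = a" "(vector [a,b,c,d] :: real^4) $ 2 = b"
 "(vector [a,b,c,d] :: real^4) $ 3 = c" "(vector [a,b,c,d] :: real^4) $ 4 = d"
  unfolding vector_def by simp_all

lemma neq4 [simp]: "(1::4) \<noteq> 2" "(1::4) \<noteq> 3" "(1::4) \<noteq> 4" "(2::4) \<noteq> 3" "(2::4) \<noteq> 4" "(3::4) \<noteq> 4"
  "(2::4) \<noteq> 1" "(3::4) \<noteq> 1" "(4::4) \<noteq> 1" "(3::4) \<noteq> 2" "(4::4) \<noteq> 2" "(4::4) \<noteq> 3"
  by simp_all

definition Qp :: "real^4^4" where "Qp = (\<chi> i j. if i = j then 1 else -1)"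

lemma mat_eq4: "(A::real^4^4) = B \<longleftrightarrow> (\<forall>i j. A$i$j = B$i$j)"
  by (simp add: vec_eq_iff)

lemma mm_entry: "((A::real^4^4) ** B) $ i $ j = A$i$1*B$1$j + A$i$2*B$2$j + A$i$3*B$3$j + A$i$4*B$4$j"
  by (simp add: matrix_matrix_mult_def sum_4)

lemma S_entries:
  "S_mat i $ r $ c = (if r = i then (if c = i then -1 else 2) else (if r = c then 1 else 0))"
  by (simp add: S_mat_def)

lemma all4: "(\<forall>i::4. P i) \<longleftrightarrow> P 1 \<and> P 2 \<and> P 3 \<and> P 4" by (rule forall_4)

lemma "S_mat 1 ** S_mat 1 = mat 1"
  by (simp add: mat_eq4 mm_entry S_entries transpose_def mat_def all4)


definition gens :: "(real^4^4) set" where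
  "gens = range S_mat \<union> range (\<lambda>i. transpose (S_mat i))"

inductive_set G0 :: "(real^4^4) set" where
  G0_one: "mat 1 \<in> G0"
| G0_step: "\<Gamma> \<in> gens \<Longrightarrow> U \<in> G0 \<Longrightarrow> \<Gamma> ** U \<in> G0"

lemma gens_cases:
  assumes "\<Gamma> \<in> gens"
  obtains "\<Gamma> = S_mat 1" | "\<Gamma> = S_mat 2" | "\<Gamma> = S_mat 3" | "\<Gamma> = S_mat 4"
   | "\<Gamma> = transpose (S_mat 1)" | "\<Gamma> = transpose (S_mat 2)" | "\<Gamma> = transpose (S_mat 3)" | "\<Gamma> = transpose (S_mat 4)"
proof -
  from assms obtain i where "\<Gamma> = S_mat i \<or> \<Gamma> = transpose (S_mat i)" unfolding gens_def by blast
  moreover have "i = 1 \<or> i = 2 \<or> i = 3 \<or> i = 4" by (rule exhaust_4)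
  ultimately show ?thesis using that by blast
qed

lemma gen_sq: "\<Gamma> \<in> gens \<Longrightarrow> \<Gamma> ** \<Gamma> = mat 1"
  by (erule gens_cases) (simp_all add: mat_eq4 mm_entry S_entries transpose_def mat_def all4)

lemma gen_rowQ: "\<Gamma> \<in> gens \<Longrightarrow> \<Gamma> ** Qp ** transpose \<Gamma> = Qp"
  by (erule gens_cases) (simp_all add: mat_eq4 mm_entry S_entries transpose_def Qp_def all4)

lemma gen_colQ: "\<Gamma> \<in> gens \<Longrightarrow> transpose \<Gamma> ** Qp ** \<Gamma> = Qp"
  by (erule gens_cases) (simp_all add: mat_eq4 mm_entry S_entries transpose_def Qp_def all4)

lemma null_bound:
  fixes a b c d s :: real
  assumes n: "s\<^sup>2 = 2*(a\<^sup>2+b\<^sup>2+c\<^sup>2+d\<^sup>2)" and s: "s = a+b+c+d" and pos: "s > 0"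
  shows "4*a > - s \<and> 4*a < 3* s"
proof -
  have eq3: "3*(b\<^sup>2+c\<^sup>2+d\<^sup>2) - (b+c+d)\<^sup>2 = (b-c)\<^sup>2+(c-d)\<^sup>2+(b-d)\<^sup>2"
    by (simp add: power2_eq_square algebra_simps)
  have cs: "(b+c+d)\<^sup>2 \<le> 3*(b\<^sup>2+c\<^sup>2+d\<^sup>2)"
    using eq3 zero_le_power2[of "b-c"] zero_le_power2[of "c-d"] zero_le_power2[of "b-d"] by linarith
  have key: "8*a\<^sup>2 - 4* s*a - s\<^sup>2 \<le> 0"
  proof -
    have "b+c+d = s - a" using s by simp
    with cs have "(s-a)\<^sup>2 \<le> 3*(b\<^sup>2+c\<^sup>2+d\<^sup>2)" by simp
    moreover have "b\<^sup>2+c\<^sup>2+d\<^sup>2 = s\<^sup>2/2 - a\<^sup>2" using n by (simp add: field_simps)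
    ultimately have "(s-a)\<^sup>2 \<le> 3*(s\<^sup>2/2 - a\<^sup>2)" by simp
    then show ?thesis by (simp add: power2_eq_square algebra_simps)
  qed
  have sp: "s\<^sup>2 > 0" using pos by simp
  have 1: "4*a > - s"
  proof (rule ccontr)
    assume "\<not> 4*a > - s"
    hence h: "-a \<ge> s/4" by simp
    have "(s/4)\<^sup>2 \<le> (-a)\<^sup>2" using h pos by (intro power_mono) auto
    hence A: "a\<^sup>2 \<ge> s\<^sup>2/16" by (simp add: power_divide)
    have "s*(s/4) \<le> s*(-a)" using h pos by (intro mult_left_mono) auto
    hence B: "-4* s*a \<ge> s\<^sup>2" by (simp add: power2_eq_square)
    from A B key sp show False by linarith
  qed
  have 2: "4*a < 3* s"
  proof (rule ccontr)
    assume "\<not> 4*a < 3* s"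
    hence h: "a \<ge> 3* s/4" by simp
    have "(3* s)*(s/2) \<le> (4*a)*(2*a-s)" by (rule mult_mono) (use h pos in linarith)+
    hence "8*a\<^sup>2 - 4* s*a \<ge> 3* s\<^sup>2/2" by (simp add: power2_eq_square algebra_simps)
    with key sp show False by linarith
  qed
  from 1 2 show ?thesis by blast
qed

definition d4 :: "4 \<Rightarrow> 4 \<Rightarrow> real" where "d4 i j = (if i = j then 1 else 0)"

definition evI :: "real^4^4 \<Rightarrow> bool" where
  "evI U \<longleftrightarrow> (\<forall>i j. U$i$j \<in> \<int> \<and> (U$i$j - d4 i j)/2 \<in> \<int>)"

lemma mm_minus_d:
  "((U::real^4^4) ** V)$i$j - d4 i j = (U$i$1 - d4 i 1)*V$1$j + (U$i$2 - d4 i 2)*V$2$j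
     + (U$i$3 - d4 i 3)*V$3$j + (U$i$4 - d4 i 4)*V$4$j + (V$i$j - d4 i j)"
proof -
  have "i = 1 \<or> i = 2 \<or> i = 3 \<or> i = 4" by (rule exhaust_4)
  then show ?thesis by (auto simp: mm_entry d4_def algebra_simps)
qed

lemma evI_mult: assumes "evI U" "evI V" shows "evI (U ** V)"
  unfolding evI_def
proof (intro allI conjI)
  fix i j
  have I: "\<And>i j. U$i$j \<in> \<int>" "\<And>i j. V$i$j \<in> \<int>" "\<And>i j. (U$i$j - d4 i j)/2 \<in> \<int>"
    "\<And>i j. (V$i$j - d4 i j)/2 \<in> \<int>" using assms unfolding evI_def by auto
  show "(U ** V)$i$j \<in> \<int>" unfolding mm_entry using I by (intro Ints_add Ints_mult) auto
  have "((U ** V)$i$j - d4 i j)/2 = ((U$i$1 - d4 i 1)/2)*V$1$j + ((U$i$2 - d4 i 2)/2)*V$2$j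
     + ((U$i$3 - d4 i 3)/2)*V$3$j + ((U$i$4 - d4 i 4)/2)*V$4$j + (V$i$j - d4 i j)/2"
    unfolding mm_minus_d by (simp add: field_simps)
  also have "\<dots> \<in> \<int>" using I by (intro Ints_add Ints_mult) auto
  finally show "((U ** V)$i$j - d4 i j)/2 \<in> \<int>" .
qed

lemma evI_one: "evI (mat 1)"
  unfolding evI_def by (simp add: mat_def d4_def)

lemma gen_evI: "\<Gamma> \<in> gens \<Longrightarrow> evI \<Gamma>"
  unfolding evI_def
  by (erule gens_cases) (simp_all add: S_entries transpose_def d4_def all4)

definition ssum :: "real^4 \<Rightarrow> real" where "ssum x = x$1 + x$2 + x$3 + x$4"
definition nullv :: "real^4 \<Rightarrow> bool" where
  "nullv x \<longleftrightarrow> (ssum x)\<^sup>2 = 2*((x$1)\<^sup>2+(x$2)\<^sup>2+(x$3)\<^sup>2+(x$4)\<^sup>2)"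
definition orth :: "real^4^4 \<Rightarrow> bool" where
  "orth U \<longleftrightarrow> (\<forall>x. nullv x \<and> ssum x > 0 \<longrightarrow> ssum (U *v x) > 0)"
definition colQ :: "real^4^4 \<Rightarrow> bool" where "colQ U \<longleftrightarrow> transpose U ** Qp ** U = Qp"
definition rowQ :: "real^4^4 \<Rightarrow> bool" where "rowQ U \<longleftrightarrow> U ** Qp ** transpose U = Qp"

lemma mv_entry: "((A::real^4^4) *v x) $ i = A$i$1*x$1 + A$i$2*x$2 + A$i$3*x$3 + A$i$4*x$4"
  by (simp add: matrix_vector_mult_def sum_4)

lemma nullv_inner: "nullv x \<longleftrightarrow> inner x (Qp *v x) = 0"
  unfolding nullv_def ssum_def inner_vec_def sum_4 mv_entry Qp_def
  by (simp add: power2_eq_square algebra_simps) (rule eq_commute)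

lemma inner_mv: "inner ((A::real^4^4) *v x) y = inner x (transpose A *v y)"
  by (metis dot_lmul_matrix transpose_matrix_vector transpose_transpose)

lemma colQ_null: assumes "colQ U" "nullv x" shows "nullv (U *v x)"
proof -
  have "inner (U *v x) (Qp *v (U *v x)) = inner x ((transpose U ** Qp ** U) *v x)"
    by (simp add: inner_mv matrix_vector_mul_assoc matrix_mul_assoc)
  also have "\<dots> = inner x (Qp *v x)" using assms(1) unfolding colQ_def by simp
  finally show ?thesis using assms(2) unfolding nullv_inner by simp
qed

lemma null_bound4:
  assumes "nullv x" "ssum x > 0"
  shows "4 * x$i > - ssum x \<and> 4 * x$i < 3 * ssum x"
proof -
  have n: "(ssum x)\<^sup>2 = 2*((x$1)\<^sup>2+(x$2)\<^sup>2+(x$3)\<^sup>2+(x$4)\<^sup>2)" using assms(1) unfolding nullv_def .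
  have "i = 1 \<or> i = 2 \<or> i = 3 \<or> i = 4" by (rule exhaust_4)
  then show ?thesis
  proof (elim disjE)
    assume "i = 1" then show ?thesis using null_bound[of "ssum x" "x$1" "x$2" "x$3" "x$4"] n assms(2)
      unfolding ssum_def by simp
  next
    assume "i = 2" then show ?thesis using null_bound[of "ssum x" "x$2" "x$1" "x$3" "x$4"] n assms(2)
      unfolding ssum_def by (simp add: ac_simps)
  next
    assume "i = 3" then show ?thesis using null_bound[of "ssum x" "x$3" "x$1" "x$2" "x$4"] n assms(2)
      unfolding ssum_def by (simp add: ac_simps)
  next
    assume "i = 4" then show ?thesis using null_bound[of "ssum x" "x$4" "x$1" "x$2" "x$3"] n assms(2)
      unfolding ssum_def by (simp add: ac_simps)
  qed
qed

lemma ssum_S: "ssum (S_mat i *v x) = 3 * ssum x - 4 * x$i"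
proof -
  have "i = 1 \<or> i = 2 \<or> i = 3 \<or> i = 4" by (rule exhaust_4)
  then show ?thesis by (elim disjE) (simp_all add: ssum_def mv_entry S_entries)
qed

lemma ssum_T: "ssum (transpose (S_mat i) *v x) = ssum x + 4 * x$i"
proof -
  have "i = 1 \<or> i = 2 \<or> i = 3 \<or> i = 4" by (rule exhaust_4)
  then show ?thesis by (elim disjE) (simp_all add: ssum_def mv_entry S_entries transpose_def)
qed

lemma gen_orth: assumes "\<Gamma> \<in> gens" shows "orth \<Gamma>"
  unfolding orth_def
proof (intro allI impI)
  fix x assume h: "nullv x \<and> ssum x > 0"
  from assms obtain i where "\<Gamma> = S_mat i \<or> \<Gamma> = transpose (S_mat i)" unfolding gens_def by blast
  then show "ssum (\<Gamma> *v x) > 0"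
    using null_bound4[of x i] h ssum_S[of i x] ssum_T[of i x] by (auto simp del: transpose_matrix_vector)
qed

definition good :: "real^4^4 \<Rightarrow> bool" where
  "good U \<longleftrightarrow> evI U \<and> orth U \<and> colQ U \<and> rowQ U"

lemma good_one: "good (mat 1)"
  unfolding good_def orth_def colQ_def rowQ_def using evI_one by (simp add: transpose_mat)

lemma good_step: assumes "\<Gamma> \<in> gens" "good U" shows "good (\<Gamma> ** U)"
proof -
  have e: "evI (\<Gamma> ** U)" using evI_mult gen_evI assms unfolding good_def by blast
  have o: "orth (\<Gamma> ** U)" unfolding orth_def
  proof (intro allI impI)
    fix x assume h: "nullv x \<and> ssum x > 0"
    have "nullv (U *v x)" using colQ_null h assms(2) unfolding good_def by blast
    moreover have "ssum (U *v x) > 0" using h assms(2) unfolding good_def orth_def by blast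
    ultimately have "ssum (\<Gamma> *v (U *v x)) > 0" using gen_orth[OF assms(1)] unfolding orth_def by blast
    then show "ssum ((\<Gamma> ** U) *v x) > 0" by (simp add: matrix_vector_mul_assoc)
  qed
  have c: "colQ (\<Gamma> ** U)"
  proof -
    have "transpose (\<Gamma> ** U) ** Qp ** (\<Gamma> ** U) = transpose U ** (transpose \<Gamma> ** Qp ** \<Gamma>) ** U"
      by (simp add: matrix_transpose_mul matrix_mul_assoc)
    also have "\<dots> = Qp" using gen_colQ[OF assms(1)] assms(2) unfolding good_def colQ_def
      by (simp add: matrix_mul_assoc)
    finally show ?thesis unfolding colQ_def .
  qed
  have r: "rowQ (\<Gamma> ** U)"
  proof -
    have "(\<Gamma> ** U) ** Qp ** transpose (\<Gamma> ** U) = \<Gamma> ** (U ** Qp ** transpose U) ** transpose \<Gamma>"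
      by (simp add: matrix_transpose_mul matrix_mul_assoc)
    also have "\<dots> = Qp" using gen_rowQ[OF assms(1)] assms(2) unfolding good_def rowQ_def
      by (simp add: matrix_mul_assoc)
    finally show ?thesis unfolding rowQ_def .
  qed
  show ?thesis using e o c r unfolding good_def by blast
qed

lemma G0_good: "U \<in> G0 \<Longrightarrow> good U"
  by (induction rule: G0.induct) (auto intro: good_one good_step)

lemma G0_mult: "U \<in> G0 \<Longrightarrow> V \<in> G0 \<Longrightarrow> U ** V \<in> G0"
  by (induction rule: G0.induct) (auto simp: matrix_mul_assoc[symmetric] intro: G0.intros)

lemma gen_G0: "\<Gamma> \<in> gens \<Longrightarrow> \<Gamma> \<in> G0"
  using G0_step[OF _ G0_one] by simp

lemma G0_inv: "U \<in> G0 \<Longrightarrow> \<exists>V\<in>G0. U ** V = mat 1 \<and> V ** U = mat 1"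
proof (induction rule: G0.induct)
  case G0_one then show ?case using G0.G0_one by auto
next
  case (G0_step \<Gamma> U)
  then obtain V where V: "V \<in> G0" "U ** V = mat 1" "V ** U = mat 1" by blast
  have "V ** \<Gamma> \<in> G0" using G0_mult[OF V(1) gen_G0[OF G0_step(1)]] .
  moreover have "(\<Gamma> ** U) ** (V ** \<Gamma>) = mat 1"
    using V gen_sq[OF G0_step(1)] by (metis matrix_mul_assoc matrix_mul_lid)
  moreover have "(V ** \<Gamma>) ** (\<Gamma> ** U) = mat 1"
    using V gen_sq[OF G0_step(1)] by (metis matrix_mul_assoc matrix_mul_lid)
  ultimately show ?case by blast
qed

lemma matrix_inv_eq: assumes "(U::real^4^4) ** V = mat 1" "V ** U = mat 1" shows "matrix_inv U = V"
proof -
  have ex: "\<exists>A'. U ** A' = mat 1 \<and> A' ** U = mat 1" using assms by blast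
  have s: "U ** matrix_inv U = mat 1 \<and> matrix_inv U ** U = mat 1"
    unfolding matrix_inv_def using someI_ex[OF ex] .
  have "matrix_inv U = matrix_inv U ** (U ** V)" using assms by simp
  also have "\<dots> = V" using s by (simp add: matrix_mul_assoc)
  finally show ?thesis .
qed

lemma superA_G0: "U \<in> superA \<Longrightarrow> U \<in> G0"
proof (induction rule: superA.induct)
  case (gen i) then show ?case using gen_G0 unfolding gens_def by blast
next
  case (gen_perp i) then show ?case using gen_G0 unfolding gens_def by blast
next
  case one then show ?case by (rule G0_one)
next
  case (mult U V) then show ?case using G0_mult by blast
next
  case (inv U)
  then obtain V where "V \<in> G0" "U ** V = mat 1" "V ** U = mat 1" using G0_inv by blast
  then show ?case using matrix_inv_eq by simp
qed

lemma G0_superA: "U \<in> G0 \<Longrightarrow> U \<in> superA"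
proof (induction rule: G0.induct)
  case G0_one then show ?case by (rule superA.one)
next
  case (G0_step \<Gamma> U)
  have "\<Gamma> \<in> superA" using G0_step(1) unfolding gens_def by (auto intro: superA.intros)
  then show ?case using G0_step(3) by (rule superA.mult)
qed

lemma superA_eq: "superA = G0" using superA_G0 G0_superA by blast


definition rowperm :: "(4 \<Rightarrow> 4) \<Rightarrow> real^4^4 \<Rightarrow> real^4^4" where
  "rowperm \<sigma> X = (\<chi> i. X $ \<sigma> i)"
definition conjp :: "(4 \<Rightarrow> 4) \<Rightarrow> real^4^4 \<Rightarrow> real^4^4" where
  "conjp \<sigma> U = (\<chi> i j. U $ \<sigma> i $ \<sigma> j)"

lemma rowperm_entry [simp]: "rowperm \<sigma> X $ i = X $ \<sigma> i"
  by (simp add: rowperm_def)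
lemma conjp_entry [simp]: "conjp \<sigma> U $ i $ j = U $ \<sigma> i $ \<sigma> j"
  by (simp add: conjp_def)

lemma sum_bij4: "bij (\<sigma>::4\<Rightarrow>4) \<Longrightarrow> (\<Sum>k\<in>UNIV. f (\<sigma> k)) = (\<Sum>k\<in>UNIV. (f k :: real))"
  using sum.reindex_bij_betw[of \<sigma> UNIV UNIV f] by simp

lemma rowperm_mult: assumes "bij \<sigma>" shows "rowperm \<sigma> (U ** X) = conjp \<sigma> U ** rowperm \<sigma> X"
proof -
  have "\<And>i j. (\<Sum>k\<in>UNIV. U $ \<sigma> i $ k * X $ k $ j) = (\<Sum>k\<in>UNIV. U $ \<sigma> i $ \<sigma> k * X $ \<sigma> k $ j)"
    using sum_bij4[OF assms, of "\<lambda>k. U $ \<sigma> _ $ k * X $ k $ _"] by simp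
  then show ?thesis by (simp add: vec_eq_iff matrix_matrix_mult_def)
qed

lemma conjp_mult: assumes "bij \<sigma>" shows "conjp \<sigma> (U ** V) = conjp \<sigma> U ** conjp \<sigma> V"
proof -
  have "\<And>i j. (\<Sum>k\<in>UNIV. U $ \<sigma> i $ k * V $ k $ \<sigma> j) = (\<Sum>k\<in>UNIV. U $ \<sigma> i $ \<sigma> k * V $ \<sigma> k $ \<sigma> j)"
    using sum_bij4[OF assms, of "\<lambda>k. U $ \<sigma> _ $ k * V $ k $ \<sigma> _"] by simp
  then show ?thesis by (simp add: vec_eq_iff matrix_matrix_mult_def)
qed

lemma conjp_one: "bij \<sigma> \<Longrightarrow> conjp \<sigma> (mat 1) = mat 1"
  by (simp add: vec_eq_iff mat_def bij_is_inj inj_eq)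

lemma conjp_S: assumes "bij \<sigma>" shows "conjp \<sigma> (S_mat i) = S_mat (inv \<sigma> i)"
proof -
  have a: "\<And>r. (\<sigma> r = i) = (r = inv \<sigma> i)" using assms by (metis bij_inv_eq_iff)
  have b: "\<And>r c. (\<sigma> r = \<sigma> c) = (r = c)" using assms by (simp add: bij_is_inj inj_eq)
  show ?thesis by (simp add: vec_eq_iff S_entries a b)
qed

lemma conjp_transpose: "conjp \<sigma> (transpose U) = transpose (conjp \<sigma> U)"
  by (simp add: vec_eq_iff transpose_def)

lemma conjp_gens: "bij \<sigma> \<Longrightarrow> \<Gamma> \<in> gens \<Longrightarrow> conjp \<sigma> \<Gamma> \<in> gens"
  unfolding gens_def by (auto simp: conjp_S conjp_transpose)

lemma conjp_G0: "U \<in> G0 \<Longrightarrow> bij \<sigma> \<Longrightarrow> conjp \<sigma> U \<in> G0"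
  by (induction rule: G0.induct) (auto simp: conjp_one conjp_mult conjp_gens intro: G0.intros)

lemma rowperm_comp: "rowperm \<sigma> (rowperm \<tau> X) = rowperm (\<tau> \<circ> \<sigma>) X"
  by (simp add: vec_eq_iff)

lemma rowperm_id: "rowperm id X = X"
  by (simp add: vec_eq_iff)

lemma rowperm_neg: "rowperm \<sigma> (- X) = - rowperm \<sigma> X"
  by (simp add: vec_eq_iff)

lemma mult_neg: "(U::real^4^4) ** (- X) = - (U ** X)"
  by (simp add: vec_eq_iff matrix_matrix_mult_def sum_negf)

subsection \<open>Equivalence under the group\<close>

definition eqv :: "real^4^4 \<Rightarrow> real^4^4 \<Rightarrow> bool" where
  "eqv X Y \<longleftrightarrow> (\<exists>U\<in>G0. U ** X = Y)"

lemma eqv_refl: "eqv X X" unfolding eqv_def using G0_one by force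

lemma eqv_trans: "eqv X Y \<Longrightarrow> eqv Y Z \<Longrightarrow> eqv X Z"
  unfolding eqv_def by (metis G0_mult matrix_mul_assoc)

lemma eqv_sym: "eqv X Y \<Longrightarrow> eqv Y X"
  unfolding eqv_def by (metis G0_inv matrix_mul_assoc matrix_mul_lid)

lemma eqv_rowperm: "bij \<sigma> \<Longrightarrow> eqv X Y \<Longrightarrow> eqv (rowperm \<sigma> X) (rowperm \<sigma> Y)"
  unfolding eqv_def by (metis conjp_G0 rowperm_mult)

lemma eqv_neg: "eqv X Y \<Longrightarrow> eqv (- X) (- Y)"
  unfolding eqv_def by (metis mult_neg)

lemma eqv_gen: "\<Gamma> \<in> gens \<Longrightarrow> eqv X (\<Gamma> ** X)"
  unfolding eqv_def using gen_G0 by blast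

definition Am :: "real^4^4" where
  "Am = (\<chi> i j. if (i = 1 \<and> j = 2) \<or> (i = 2 \<and> j = 1) then -1/2 else if i = j \<and> (i = 3 \<or> i = 4) then 1 else 0)"

definition beta :: "real^4 \<Rightarrow> real^4 \<Rightarrow> real" where
  "beta x y = - (x$1*y$2 + x$2*y$1)/2 + x$3*y$3 + x$4*y$4"

definition relW :: "real^4^4 \<Rightarrow> bool" where
  "relW W \<longleftrightarrow> W ** Am ** transpose W = Qp"

lemma relW_entry: "((W::real^4^4) ** Am ** transpose W) $ i $ j = beta (W$i) (W$j)"
  by (simp add: mm_entry Am_def transpose_def beta_def field_simps)

lemma relW_iff: "relW W \<longleftrightarrow> (\<forall>i j. beta (W$i) (W$j) = (if i = j then 1 else -1))"
  unfolding relW_def mat_eq4 relW_entry by (simp add: Qp_def)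

lemma relW_G0: assumes "U \<in> G0" "relW W" shows "relW (U ** W)"
proof -
  have "(U ** W) ** Am ** transpose (U ** W) = U ** (W ** Am ** transpose W) ** transpose U"
    by (simp add: matrix_transpose_mul matrix_mul_assoc)
  also have "\<dots> = Qp" using assms G0_good[OF assms(1)] unfolding relW_def good_def rowQ_def by simp
  finally show ?thesis unfolding relW_def .
qed

lemma relW_rowperm: assumes "bij \<sigma>" "relW W" shows "relW (rowperm \<sigma> W)"
  using assms unfolding relW_iff by (simp add: bij_is_inj inj_eq)

lemma relW_neg: "relW W \<Longrightarrow> relW (- W)"
  unfolding relW_iff by (simp add: beta_def)

definition Qp4 :: "real^4^4" where "Qp4 = (\<chi> i j. if i = j then 1/4 else -1/4)"
definition Amp :: "real^4^4" where
  "Amp = (\<chi> i j. if (i = 1 \<and> j = 2) \<or> (i = 2 \<and> j = 1) then -2 else if i = j \<and> (i = 3 \<or> i = 4) then 1 else 0)"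

lemma Qp_Qp4: "Qp ** Qp4 = mat 1"
  by (simp add: mat_eq4 mm_entry Qp_def Qp4_def mat_def all4)

lemma Amp_Am: "Amp ** Am = mat 1"
  by (simp add: mat_eq4 mm_entry Am_def Amp_def mat_def all4)

lemma relW_col: assumes "relW W" shows "transpose W ** Qp4 ** W = Amp"
proof -
  let ?B = "Am ** transpose W ** Qp4"
  have "W ** ?B = (W ** Am ** transpose W) ** Qp4" by (simp add: matrix_mul_assoc)
  also have "\<dots> = mat 1" using assms Qp_Qp4 unfolding relW_def by simp
  finally have "?B ** W = mat 1" using matrix_left_right_inverse by blast
  hence "Amp ** (?B ** W) = Amp" by simp
  hence "(Amp ** Am) ** (transpose W ** Qp4 ** W) = Amp" by (simp add: matrix_mul_assoc)
  then show ?thesis using Amp_Am by simp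
qed

definition curv :: "real^4^4 \<Rightarrow> real^4" where "curv W = (\<chi> i. W$i$2)"

lemma curv_entry [simp]: "curv W $ i = W $ i $ 2" by (simp add: curv_def)

lemma curv_mult: "curv (U ** W) = U *v curv W"
  by (simp add: vec_eq_iff matrix_matrix_mult_def matrix_vector_mult_def)

lemma relW_null: assumes "relW W" shows "nullv (curv W)"
proof -
  have "(transpose W ** Qp4 ** W) $ 2 $ 2 = 0" using relW_col[OF assms] by (simp add: Amp_def)
  then show ?thesis unfolding nullv_def ssum_def
    by (simp add: mm_entry transpose_def Qp4_def power2_eq_square algebra_simps)
qed


lemma Ints_mv: assumes "evI U" "\<forall>k. x$k \<in> \<int>" shows "(U *v x)$i \<in> \<int>"
proof -
  have "\<And>i j. U$i$j \<in> \<int>" using assms(1) unfolding evI_def by blast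
  then show ?thesis unfolding mv_entry using assms(2) by (intro Ints_add Ints_mult) auto
qed

lemma Ints_ssum: "\<forall>k. x$k \<in> \<int> \<Longrightarrow> ssum x \<in> \<int>"
  unfolding ssum_def by (intro Ints_add) auto

lemma nat_floor_less: assumes "(a::real) \<in> \<int>" "b \<in> \<int>" "0 < a" "a < b" shows "nat \<lfloor>a\<rfloor> < nat \<lfloor>b\<rfloor>"
proof -
  obtain m n where "a = of_int m" "b = of_int n" using assms(1,2) Ints_cases by metis
  then show ?thesis using assms(3,4) by simp
qed

lemma final_form:
  fixes a b c d s :: real
  assumes n: "s\<^sup>2 = 2*(a\<^sup>2+b\<^sup>2+c\<^sup>2+d\<^sup>2)" and s: "s = a+b+c+d" and pos: "s > 0"
   and nn: "a \<ge> 0" "b \<ge> 0" "c \<ge> 0" "d \<ge> 0" and le: "2*a \<le> s" "2*b \<le> s" "2*c \<le> s" "2*d \<le> s"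
  shows "(a = 0 \<or> 2*a = s) \<and> (b = 0 \<or> 2*b = s) \<and> (c = 0 \<or> 2*c = s) \<and> (d = 0 \<or> 2*d = s)"
proof -
  define ta where "ta = s - 2*a"
  define tb where "tb = s - 2*b"
  define tc where "tc = s - 2*c"
  define td where "td = s - 2*d"
  have e: "ta*(s-ta) + tb*(s-tb) + tc*(s-tc) + td*(s-td) = 0"
    unfolding ta_def tb_def tc_def td_def using n s by (simp add: power2_eq_square algebra_simps)
  have p: "ta*(s-ta) \<ge> 0" "tb*(s-tb) \<ge> 0" "tc*(s-tc) \<ge> 0" "td*(s-td) \<ge> 0"
    unfolding ta_def tb_def tc_def td_def using nn le by simp_all
  have z: "ta*(s-ta) = 0" "tb*(s-tb) = 0" "tc*(s-tc) = 0" "td*(s-td) = 0"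
    using e p by linarith+
  have "ta = 0 \<or> s - ta = 0" "tb = 0 \<or> s - tb = 0" "tc = 0 \<or> s - tc = 0" "td = 0 \<or> s - td = 0"
    using z by simp_all
  then show ?thesis unfolding ta_def tb_def tc_def td_def by linarith
qed

lemma reduce:
  "relW W \<Longrightarrow> (\<forall>i. W$i$2 \<in> \<int>) \<Longrightarrow> ssum (curv W) > 0 \<Longrightarrow>
   \<exists>U\<in>G0. (\<forall>i. (U**W)$i$2 = 0 \<or> 2*(U**W)$i$2 = ssum (curv (U**W))) \<and> ssum (curv (U**W)) > 0"
proof (induction W rule: measure_induct_rule[where f="\<lambda>W. nat \<lfloor>ssum (curv W)\<rfloor>"])
  case (less W)
  let ?b = "curv W" and ?s = "ssum (curv W)"
  have null: "nullv ?b" using relW_null[OF less.prems(1)] .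
  have bint: "\<forall>k. ?b$k \<in> \<int>" using less.prems(2) by simp
  have step: "\<exists>U\<in>G0. (\<forall>i. (U**W)$i$2 = 0 \<or> 2*(U**W)$i$2 = ssum (curv (U**W))) \<and> ssum (curv (U**W)) > 0"
    if G: "\<Gamma> \<in> gens" and lt: "ssum (curv (\<Gamma> ** W)) < ?s" and gt: "ssum (curv (\<Gamma> ** W)) > 0" for \<Gamma>
  proof -
    let ?W = "\<Gamma> ** W"
    have r: "relW ?W" using relW_G0[OF gen_G0[OF G] less.prems(1)] .
    have ci: "\<forall>i. ?W$i$2 \<in> \<int>"
    proof
      fix i have "?W$i$2 = (\<Gamma> *v ?b)$i" using curv_mult[of \<Gamma> W] by (metis curv_entry)
      also have "\<dots> \<in> \<int>" using Ints_mv[OF gen_evI[OF G] bint] .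
      finally show "?W$i$2 \<in> \<int>" .
    qed
    have "nat \<lfloor>ssum (curv ?W)\<rfloor> < nat \<lfloor>?s\<rfloor>"
      using nat_floor_less[OF _ _ gt lt] Ints_ssum ci bint by simp
    then obtain U where U: "U \<in> G0" "\<forall>i. (U**?W)$i$2 = 0 \<or> 2*(U**?W)$i$2 = ssum (curv (U**?W))"
       "ssum (curv (U**?W)) > 0"
      using less.IH[OF _ r ci gt] by blast
    have "U ** \<Gamma> \<in> G0" using G0_mult[OF U(1) gen_G0[OF G]] .
    moreover have "(U ** \<Gamma>) ** W = U ** ?W" by (simp add: matrix_mul_assoc)
    ultimately show ?thesis using U by metis
  qed
  consider (neg) i where "?b$i < 0" | (big) i where "2 * ?b$i > ?s" | (fin) "\<forall>i. ?b$i \<ge> 0 \<and> 2 * ?b$i \<le> ?s"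
    by (meson not_le)
  then show ?case
  proof cases
    case neg
    let ?G = "transpose (S_mat i)"
    have G: "?G \<in> gens" unfolding gens_def by blast
    have e: "ssum (curv (?G ** W)) = ?s + 4 * ?b$i"
      unfolding curv_mult using ssum_T[of i ?b] by (simp del: transpose_matrix_vector)
    show ?thesis
      by (rule step[OF G]) (use e neg null_bound4[OF null less.prems(3), of i] in linarith)+
  next
    case big
    let ?G = "S_mat i"
    have G: "?G \<in> gens" unfolding gens_def by blast
    have e: "ssum (curv (?G ** W)) = 3 * ?s - 4 * ?b$i"
      unfolding curv_mult using ssum_S[of i ?b] by simp
    show ?thesis
      by (rule step[OF G]) (use e big null_bound4[OF null less.prems(3), of i] in linarith)+
  next
    case fin
    have ff: "(?b$1 = 0 \<or> 2*?b$1 = ?s) \<and> (?b$2 = 0 \<or> 2*?b$2 = ?s) \<and> (?b$3 = 0 \<or> 2*?b$3 = ?s) \<and> (?b$4 = 0 \<or> 2*?b$4 = ?s)"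
    proof (rule final_form)
      show "?s\<^sup>2 = 2*((?b$1)\<^sup>2+(?b$2)\<^sup>2+(?b$3)\<^sup>2+(?b$4)\<^sup>2)" using null unfolding nullv_def .
      show "?s = ?b$1 + ?b$2 + ?b$3 + ?b$4" by (simp only: ssum_def)
      show "?s > 0" by (rule less.prems(3))
    qed (use fin in blast)+
    have "\<forall>i. ?b$i = 0 \<or> 2*?b$i = ?s" using ff unfolding all4 .
    then show ?thesis using G0_one less.prems(3) by (intro bexI[of _ "mat 1"]) auto
  qed
qed


definition swp :: "4 \<Rightarrow> 4 \<Rightarrow> 4 \<Rightarrow> 4" where
  "swp a b = (\<lambda>i. if i = a then b else if i = b then a else i)"

lemma swp_swp: "swp a b \<circ> swp a b = id"
  by (rule ext) (simp add: swp_def)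

lemma swp_bij: "bij (swp a b)"
  using o_bij[OF swp_swp swp_swp] .

lemma swp_app [simp]: "swp a b a = b" "swp a b b = a" "i \<noteq> a \<Longrightarrow> i \<noteq> b \<Longrightarrow> swp a b i = i"
  by (auto simp: swp_def)

definition mkM :: "real^4 \<Rightarrow> real^4 \<Rightarrow> real^4 \<Rightarrow> real^4 \<Rightarrow> real^4^4" where
  "mkM r1 r2 r3 r4 = (\<chi> i. if i = 1 then r1 else if i = 2 then r2 else if i = 3 then r3 else r4)"

lemma mkM_rows [simp]: "mkM r1 r2 r3 r4 $ 1 = r1" "mkM r1 r2 r3 r4 $ 2 = r2"
  "mkM r1 r2 r3 r4 $ 3 = r3" "mkM r1 r2 r3 r4 $ 4 = r4"
  by (simp_all add: mkM_def)

definition BH :: "real \<Rightarrow> real \<Rightarrow> real \<Rightarrow> real^4^4" where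
  "BH g p q = mkM (vector [2*(q+1)/g, 0, 0, 1]) (vector [2*(1-q)/g, 0, 0, -1])
     (vector [(p\<^sup>2+q\<^sup>2-1)/g, g, p, q]) (vector [((p-2)\<^sup>2+q\<^sup>2-1)/g, g, p-2, q])"

definition BV :: "real \<Rightarrow> real \<Rightarrow> real \<Rightarrow> real^4^4" where
  "BV g p q = mkM (vector [2*(p+1)/g, 0, 1, 0]) (vector [2*(1-p)/g, 0, -1, 0])
     (vector [(p\<^sup>2+q\<^sup>2-1)/g, g, p, q]) (vector [(p\<^sup>2+(q-2)\<^sup>2-1)/g, g, p, q-2])"

lemma moveH_x: "g \<noteq> 0 \<Longrightarrow> S_mat 4 ** BH g p q = rowperm (swp 3 4) (BH g (p+2) q)"
  by (simp add: mat_eq4 all4 mm_entry S_entries BH_def field_simps power2_eq_square)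

lemma moveH_y: "g \<noteq> 0 \<Longrightarrow> transpose (S_mat 1) ** BH g p q = rowperm (swp 1 2) (BH g p (q+2))"
  by (simp add: mat_eq4 all4 mm_entry S_entries transpose_def BH_def field_simps power2_eq_square)

lemma moveV_y: "g \<noteq> 0 \<Longrightarrow> S_mat 4 ** BV g p q = rowperm (swp 3 4) (BV g p (q+2))"
  by (simp add: mat_eq4 all4 mm_entry S_entries BV_def field_simps power2_eq_square)

lemma moveV_x: "g \<noteq> 0 \<Longrightarrow> transpose (S_mat 1) ** BV g p q = rowperm (swp 1 2) (BV g (p+2) q)"
  by (simp add: mat_eq4 all4 mm_entry S_entries transpose_def BV_def field_simps power2_eq_square)


declare eqv_trans[trans]

lemma eqv_swap_back:
  assumes "eqv X (rowperm (swp a b) Y)" shows "eqv Y (rowperm (swp a b) X)"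
proof -
  have "eqv (rowperm (swp a b) X) (rowperm (swp a b) (rowperm (swp a b) Y))"
    using eqv_rowperm[OF swp_bij assms] .
  then have "eqv (rowperm (swp a b) X) Y" by (simp add: rowperm_comp swp_swp rowperm_id)
  then show ?thesis by (rule eqv_sym)
qed

lemma parity1:
  fixes G :: "int \<Rightarrow> real^4^4"
  assumes h: "\<And>p. eqv (G p) (rowperm (swp a b) (G (p+2)))"
  shows "\<exists>\<kappa>. bij \<kappa> \<and> eqv (G p) (rowperm \<kappa> (G (p mod 2)))"
proof -
  define r where "r = p mod 2"
  have r01: "r = 0 \<or> r = 1" unfolding r_def by auto
  have P: "\<exists>\<kappa>. bij \<kappa> \<and> eqv (G (r + 2*k)) (rowperm \<kappa> (G r))" for k
  proof (induction k rule: int_induct[where k=0])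
    case base then show ?case by (metis bij_id eqv_refl rowperm_id add_0_right mult_zero_right)
  next
    case (step1 i)
    then obtain \<kappa> where k: "bij \<kappa>" "eqv (G (r + 2*i)) (rowperm \<kappa> (G r))" by blast
    have "eqv (G (r + 2*(i+1))) (rowperm (swp a b) (G (r + 2*i)))"
      using eqv_swap_back[OF h[of "r + 2*i"]] by (simp add: algebra_simps)
    also have "eqv \<dots> (rowperm (swp a b) (rowperm \<kappa> (G r)))" by (rule eqv_rowperm[OF swp_bij k(2)])
    finally have "eqv (G (r + 2*(i+1))) (rowperm (\<kappa> \<circ> swp a b) (G r))" by (simp only: rowperm_comp)
    then show ?case using bij_comp[OF swp_bij k(1)] by blast
  next
    case (step2 i)
    then obtain \<kappa> where k: "bij \<kappa>" "eqv (G (r + 2*i)) (rowperm \<kappa> (G r))" by blast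
    have "eqv (G (r + 2*(i-1))) (rowperm (swp a b) (G (r + 2*i)))"
      using h[of "r + 2*(i-1)"] by (simp add: algebra_simps)
    also have "eqv \<dots> (rowperm (swp a b) (rowperm \<kappa> (G r)))" by (rule eqv_rowperm[OF swp_bij k(2)])
    finally have "eqv (G (r + 2*(i-1))) (rowperm (\<kappa> \<circ> swp a b) (G r))" by (simp only: rowperm_comp)
    then show ?case using bij_comp[OF swp_bij k(1)] by blast
  qed
  have "p = r + 2 * (p div 2)" unfolding r_def by simp
  then show ?thesis using P[of "p div 2"] unfolding r_def by metis
qed

lemma parity2:
  fixes F :: "real \<Rightarrow> real \<Rightarrow> real^4^4"
  assumes hx: "\<And>p q. eqv (F p q) (rowperm (swp a b) (F (p+2) q))"
      and hy: "\<And>p q. eqv (F p q) (rowperm (swp c d) (F p (q+2)))"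
  shows "\<exists>\<kappa>. bij \<kappa> \<and> eqv (F (of_int p) (of_int q)) (rowperm \<kappa> (F (of_int (p mod 2)) (of_int (q mod 2))))"
proof -
  have "\<exists>\<kappa>1. bij \<kappa>1 \<and> eqv (F (of_int p) (of_int q)) (rowperm \<kappa>1 (F (of_int (p mod 2)) (of_int q)))"
  proof (rule parity1[where G="\<lambda>p. F (of_int p) (of_int q)"])
    fix p show "eqv (F (of_int p) (of_int q)) (rowperm (swp a b) (F (of_int (p+2)) (of_int q)))"
      using hx[of "of_int p" "of_int q"] by simp
  qed
  then obtain \<kappa>1 where k1: "bij \<kappa>1" "eqv (F (of_int p) (of_int q)) (rowperm \<kappa>1 (F (of_int (p mod 2)) (of_int q)))"
    by blast
  have "\<exists>\<kappa>2. bij \<kappa>2 \<and> eqv (F (of_int (p mod 2)) (of_int q)) (rowperm \<kappa>2 (F (of_int (p mod 2)) (of_int (q mod 2))))"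
  proof (rule parity1[where G="\<lambda>q. F (of_int (p mod 2)) (of_int q)"])
    fix q show "eqv (F (of_int (p mod 2)) (of_int q)) (rowperm (swp c d) (F (of_int (p mod 2)) (of_int (q+2))))"
      using hy[of "of_int (p mod 2)" "of_int q"] by simp
  qed
  then obtain \<kappa>2 where k2: "bij \<kappa>2" "eqv (F (of_int (p mod 2)) (of_int q)) (rowperm \<kappa>2 (F (of_int (p mod 2)) (of_int (q mod 2))))"
    by blast
  have "eqv (F (of_int p) (of_int q)) (rowperm \<kappa>1 (rowperm \<kappa>2 (F (of_int (p mod 2)) (of_int (q mod 2)))))"
    using eqv_trans[OF k1(2) eqv_rowperm[OF k1(1) k2(2)]] .
  then have "eqv (F (of_int p) (of_int q)) (rowperm (\<kappa>2 \<circ> \<kappa>1) (F (of_int (p mod 2)) (of_int (q mod 2))))"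
    by (simp only: rowperm_comp)
  then show ?thesis using bij_comp[OF k1(1) k2(1)] by blast
qed

lemma parityH: assumes "g \<noteq> 0"
  shows "\<exists>\<kappa>. bij \<kappa> \<and> eqv (BH g (of_int p) (of_int q)) (rowperm \<kappa> (BH g (of_int (p mod 2)) (of_int (q mod 2))))"
proof (rule parity2)
  fix p q show "eqv (BH g p q) (rowperm (swp 3 4) (BH g (p+2) q))"
    using eqv_gen[of "S_mat 4" "BH g p q"] moveH_x[OF assms] unfolding gens_def by auto
next
  fix p q show "eqv (BH g p q) (rowperm (swp 1 2) (BH g p (q+2)))"
    using eqv_gen[of "transpose (S_mat 1)" "BH g p q"] moveH_y[OF assms] unfolding gens_def by auto
qed

lemma parityV: assumes "g \<noteq> 0"
  shows "\<exists>\<kappa>. bij \<kappa> \<and> eqv (BV g (of_int p) (of_int q)) (rowperm \<kappa> (BV g (of_int (p mod 2)) (of_int (q mod 2))))"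
proof (rule parity2)
  fix p q show "eqv (BV g p q) (rowperm (swp 1 2) (BV g (p+2) q))"
    using eqv_gen[of "transpose (S_mat 1)" "BV g p q"] moveV_x[OF assms] unfolding gens_def by auto
next
  fix p q show "eqv (BV g p q) (rowperm (swp 3 4) (BV g p (q+2)))"
    using eqv_gen[of "S_mat 4" "BV g p q"] moveV_y[OF assms] unfolding gens_def by auto
qed


lemma int_unit: fixes a b :: int assumes "a\<^sup>2 + b\<^sup>2 = 1"
  shows "(a = 0 \<and> (b = 1 \<or> b = -1)) \<or> (b = 0 \<and> (a = 1 \<or> a = -1))"
proof -
  have sq: "\<And>x::int. \<bar>x\<bar> \<ge> 2 \<Longrightarrow> x\<^sup>2 \<ge> 4"
  proof -
    fix x :: int assume "\<bar>x\<bar> \<ge> 2"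
    then have "2\<^sup>2 \<le> \<bar>x\<bar>\<^sup>2" by (intro power_mono) auto
    then show "x\<^sup>2 \<ge> 4" by simp
  qed
  have "\<bar>a\<bar> \<le> 1"
  proof (rule ccontr)
    assume "\<not> \<bar>a\<bar> \<le> 1" then have "\<bar>a\<bar> \<ge> 2" by simp
    then have "a\<^sup>2 \<ge> 4" by (rule sq)
    with assms zero_le_power2[of b] show False by linarith
  qed
  moreover have "\<bar>b\<bar> \<le> 1"
  proof (rule ccontr)
    assume "\<not> \<bar>b\<bar> \<le> 1" then have "\<bar>b\<bar> \<ge> 2" by simp
    then have "b\<^sup>2 \<ge> 4" by (rule sq)
    with assms zero_le_power2[of a] show False by linarith
  qed
  ultimately have "a \<in> {-1,0,1}" "b \<in> {-1,0,1}" by auto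
  then show ?thesis using assms by auto
qed

lemma struct_lem:
  fixes Z :: "real^4^4" and g :: real
  assumes r: "relW Z" and i3: "\<forall>i. Z$i$3 \<in> \<int>" and i4: "\<forall>i. Z$i$4 \<in> \<int>"
   and c: "Z$1$2 = 0" "Z$2$2 = 0" "Z$3$2 = g" "Z$4$2 = g" and gp: "g > 0"
  shows "\<exists>\<pi> p q. bij \<pi> \<and> p \<in> \<int> \<and> q \<in> \<int> \<and> (rowperm \<pi> Z = BH g p q \<or> rowperm \<pi> Z = BV g p q)"
proof -
  have b: "\<And>i j. beta (Z$i) (Z$j) = (if i = j then 1 else -1)" using r relW_iff by blast
  define a where "a = Z$1$3"
  define bb where "bb = Z$1$4"
  define p where "p = Z$3$3"
  define q where "q = Z$3$4"
  define x where "x = Z$4$3"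
  define y where "y = Z$4$4"
  have e11: "a\<^sup>2 + bb\<^sup>2 = 1" using b[of 1 1] c unfolding a_def bb_def by (simp add: beta_def power2_eq_square)
  have e22: "(Z$2$3)\<^sup>2 + (Z$2$4)\<^sup>2 = 1" using b[of 2 2] c by (simp add: beta_def power2_eq_square)
  have e12: "a*Z$2$3 + bb*Z$2$4 = -1" using b[of 1 2] c unfolding a_def bb_def by (simp add: beta_def)
  have "(a + Z$2$3)\<^sup>2 + (bb + Z$2$4)\<^sup>2 = (a\<^sup>2 + bb\<^sup>2) + ((Z$2$3)\<^sup>2 + (Z$2$4)\<^sup>2) + 2*(a*Z$2$3 + bb*Z$2$4)"
    by (simp add: power2_eq_square algebra_simps)
  also have "\<dots> = 0" using e11 e22 e12 by simp
  finally have "a + Z$2$3 = 0 \<and> bb + Z$2$4 = 0" by (simp add: sum_power2_eq_zero_iff)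
  then have z23: "Z$2$3 = -a" and z24: "Z$2$4 = -bb" by linarith+
  have g0: "g \<noteq> 0" using gp by simp
  have e33: "g * Z$3$1 = p\<^sup>2 + q\<^sup>2 - 1" using b[of 3 3] c unfolding p_def q_def
    by (simp add: beta_def power2_eq_square algebra_simps)
  have e44: "g * Z$4$1 = x\<^sup>2 + y\<^sup>2 - 1" using b[of 4 4] c unfolding x_def y_def
    by (simp add: beta_def power2_eq_square algebra_simps)
  have e13: "g * Z$1$1 = 2*(a*p + bb*q + 1)" using b[of 1 3] c unfolding a_def bb_def p_def q_def
    by (simp add: beta_def algebra_simps)
  have e14: "g * Z$1$1 = 2*(a*x + bb*y + 1)" using b[of 1 4] c unfolding a_def bb_def x_def y_def
    by (simp add: beta_def algebra_simps)
  have e23: "g * Z$2$1 = 2*(-a*p - bb*q + 1)" using b[of 2 3] c z23 z24 unfolding p_def q_def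
    by (simp add: beta_def algebra_simps)
  have e34: "g * Z$3$1 + g * Z$4$1 = 2*(p*x + q*y) + 2" using b[of 3 4] c unfolding p_def q_def x_def y_def
    by (simp add: beta_def field_simps)
  have orth: "a*(x - p) + bb*(y - q) = 0" using e13 e14 by (simp add: algebra_simps)
  have "(x - p)\<^sup>2 + (y - q)\<^sup>2 = (p\<^sup>2 + q\<^sup>2 - 1) + (x\<^sup>2 + y\<^sup>2 - 1) - 2*(p*x + q*y) + 2"
    by (simp add: power2_eq_square algebra_simps)
  also have "\<dots> = 4" using e33 e44 e34 by linarith
  finally have dist: "(x - p)\<^sup>2 + (y - q)\<^sup>2 = 4" .
  have f11: "Z$1$1 = 2*(a*p + bb*q + 1)/g" using e13 g0 by (simp add: field_simps)
  have f21: "Z$2$1 = 2*(-a*p - bb*q + 1)/g" using e23 g0 by (simp add: field_simps)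
  have f31: "Z$3$1 = (p\<^sup>2 + q\<^sup>2 - 1)/g" using e33 g0 by (simp add: field_simps)
  have f41: "Z$4$1 = (x\<^sup>2 + y\<^sup>2 - 1)/g" using e44 g0 by (simp add: field_simps)
  have pI: "p \<in> \<int>" "q \<in> \<int>" using i3 i4 unfolding p_def q_def by auto
  have pI2: "p + 2 \<in> \<int>" "q + 2 \<in> \<int>" using pI by auto
  obtain ia ib where iab: "a = of_int ia" "bb = of_int ib" using i3 i4 unfolding a_def bb_def by (metis Ints_cases)
  have "ia\<^sup>2 + ib\<^sup>2 = 1" using e11 iab by (metis of_int_add of_int_eq_1_iff of_int_power)
  then have unit: "(a = 0 \<and> (bb = 1 \<or> bb = -1)) \<or> (bb = 0 \<and> (a = 1 \<or> a = -1))"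
    using int_unit iab by fastforce
  have sq4: "\<And>t::real. t\<^sup>2 = 4 \<Longrightarrow> t = 2 \<or> t = -2"
  proof -
    fix t :: real assume "t\<^sup>2 = 4"
    then have "t\<^sup>2 = 2\<^sup>2" by simp
    then show "t = 2 \<or> t = -2" using power2_eq_iff by blast
  qed
  note defs = a_def[symmetric] bb_def[symmetric] p_def[symmetric] q_def[symmetric] x_def[symmetric] y_def[symmetric]
  note F = f11 f21 f31 f41 c z23 z24 defs
  from unit show ?thesis
  proof (elim disjE conjE)
    assume ha: "a = 0" and hb: "bb = 1"
    have hy: "y = q" using orth ha hb by simp
    have "x - p = 2 \<or> x - p = -2" using dist hy sq4 by simp
    then show ?thesis
    proof
      assume "x - p = 2"
      then have hx: "x = p + 2" by simp
      have "rowperm (swp 3 4) Z = BH g (p+2) q"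
        by (simp add: mat_eq4 all4 BH_def F ha hb hx hy)
      then show ?thesis using swp_bij pI2 pI by blast
    next
      assume "x - p = -2"
      then have hx: "x = p - 2" by simp
      have "rowperm id Z = BH g p q"
        by (simp add: mat_eq4 all4 BH_def F ha hb hx hy)
      then show ?thesis using bij_id pI by blast
    qed
  next
    assume ha: "a = 0" and hb: "bb = -1"
    have hy: "y = q" using orth ha hb by simp
    have "x - p = 2 \<or> x - p = -2" using dist hy sq4 by simp
    then show ?thesis
    proof
      assume "x - p = 2"
      then have hx: "x = p + 2" by simp
      have "rowperm (swp 1 2 \<circ> swp 3 4) Z = BH g (p+2) q"
        by (simp add: mat_eq4 all4 BH_def F ha hb hx hy)
      then show ?thesis using bij_comp[OF swp_bij swp_bij] pI2 pI by blast
    next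
      assume "x - p = -2"
      then have hx: "x = p - 2" by simp
      have "rowperm (swp 1 2) Z = BH g p q"
        by (simp add: mat_eq4 all4 BH_def F ha hb hx hy)
      then show ?thesis using swp_bij pI by blast
    qed
  next
    assume hb: "bb = 0" and ha: "a = 1"
    have hx: "x = p" using orth ha hb by simp
    have "y - q = 2 \<or> y - q = -2" using dist hx sq4 by simp
    then show ?thesis
    proof
      assume "y - q = 2"
      then have hy: "y = q + 2" by simp
      have "rowperm (swp 3 4) Z = BV g p (q+2)"
        by (simp add: mat_eq4 all4 BV_def F ha hb hx hy)
      then show ?thesis using swp_bij pI2 pI by blast
    next
      assume "y - q = -2"
      then have hy: "y = q - 2" by simp
      have "rowperm id Z = BV g p q"
        by (simp add: mat_eq4 all4 BV_def F ha hb hx hy)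
      then show ?thesis using bij_id pI by blast
    qed
  next
    assume hb: "bb = 0" and ha: "a = -1"
    have hx: "x = p" using orth ha hb by simp
    have "y - q = 2 \<or> y - q = -2" using dist hx sq4 by simp
    then show ?thesis
    proof
      assume "y - q = 2"
      then have hy: "y = q + 2" by simp
      have "rowperm (swp 1 2 \<circ> swp 3 4) Z = BV g p (q+2)"
        by (simp add: mat_eq4 all4 BV_def F ha hb hx hy)
      then show ?thesis using bij_comp[OF swp_bij swp_bij] pI2 pI by blast
    next
      assume "y - q = -2"
      then have hy: "y = q - 2" by simp
      have "rowperm (swp 1 2) Z = BV g p q"
        by (simp add: mat_eq4 all4 BV_def F ha hb hx hy)
      then show ?thesis using swp_bij pI by blast
    qed
  qed
qed


lemma sort_pattern:
  fixes b :: "real^4" assumes c: "\<forall>i. b$i = 0 \<or> b$i = h" and s: "b$1+b$2+b$3+b$4 = 2*h" and h: "h > 0"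
  shows "\<exists>\<tau>::4\<Rightarrow>4. bij \<tau> \<and> b$(\<tau> 1) = 0 \<and> b$(\<tau> 2) = 0 \<and> b$(\<tau> 3) = h \<and> b$(\<tau> 4) = h"
proof -
  have c1: "b$1 = 0 \<or> b$1 = h" and c2: "b$2 = 0 \<or> b$2 = h" and c3: "b$3 = 0 \<or> b$3 = h"
    and c4: "b$4 = 0 \<or> b$4 = h" using c by auto
  have hne: "h \<noteq> 0" using h by simp
  have "(b$1 = 0 \<and> b$2 = 0 \<and> b$3 = h \<and> b$4 = h) \<or> (b$1 = 0 \<and> b$3 = 0 \<and> b$2 = h \<and> b$4 = h) \<or>
        (b$1 = 0 \<and> b$4 = 0 \<and> b$2 = h \<and> b$3 = h) \<or> (b$2 = 0 \<and> b$3 = 0 \<and> b$1 = h \<and> b$4 = h) \<or>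
        (b$2 = 0 \<and> b$4 = 0 \<and> b$1 = h \<and> b$3 = h) \<or> (b$3 = 0 \<and> b$4 = 0 \<and> b$1 = h \<and> b$2 = h)"
    using c1 c2 c3 c4 s hne by (elim disjE) (simp_all add: hne)
  then show ?thesis
  proof (elim disjE)
    assume "b$1 = 0 \<and> b$2 = 0 \<and> b$3 = h \<and> b$4 = h" then show ?thesis using bij_id by (intro exI[of _ id]) simp
  next
    assume "b$1 = 0 \<and> b$3 = 0 \<and> b$2 = h \<and> b$4 = h" then show ?thesis using swp_bij by (intro exI[of _ "swp 2 3"]) simp
  next
    assume "b$1 = 0 \<and> b$4 = 0 \<and> b$2 = h \<and> b$3 = h" then show ?thesis using swp_bij by (intro exI[of _ "swp 2 4"]) simp
  next
    assume "b$2 = 0 \<and> b$3 = 0 \<and> b$1 = h \<and> b$4 = h" then show ?thesis using swp_bij by (intro exI[of _ "swp 1 3"]) simp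
  next
    assume "b$2 = 0 \<and> b$4 = 0 \<and> b$1 = h \<and> b$3 = h" then show ?thesis using swp_bij by (intro exI[of _ "swp 1 4"]) simp
  next
    assume "b$3 = 0 \<and> b$4 = 0 \<and> b$1 = h \<and> b$2 = h" then show ?thesis using bij_comp[OF swp_bij swp_bij]
      by (intro exI[of _ "swp 1 3 \<circ> swp 2 4"]) simp
  qed
qed

definition dvdv :: "int \<Rightarrow> real^4 \<Rightarrow> bool" where
  "dvdv h x \<longleftrightarrow> (\<forall>i. \<exists>k::int. x$i = of_int h * of_int k)"

lemma evI_ints: "evI U \<Longrightarrow> \<exists>k::int. U$i$j = of_int k"
  unfolding evI_def using Ints_cases by metis

lemma dvdv_mv: assumes "evI U" "dvdv h x" shows "dvdv h (U *v x)"
  unfolding dvdv_def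
proof
  fix i
  obtain u1 where u1: "U$i$1 = of_int u1" using evI_ints[OF assms(1)] by blast
  obtain u2 where u2: "U$i$2 = of_int u2" using evI_ints[OF assms(1)] by blast
  obtain u3 where u3: "U$i$3 = of_int u3" using evI_ints[OF assms(1)] by blast
  obtain u4 where u4: "U$i$4 = of_int u4" using evI_ints[OF assms(1)] by blast
  note u = u1 u2 u3 u4
  have kk: "\<And>j. \<exists>k::int. x$j = of_int h * of_int k" using assms(2) unfolding dvdv_def by blast
  obtain k1 where k1: "x$1 = of_int h * of_int k1" using kk by blast
  obtain k2 where k2: "x$2 = of_int h * of_int k2" using kk by blast
  obtain k3 where k3: "x$3 = of_int h * of_int k3" using kk by blast
  obtain k4 where k4: "x$4 = of_int h * of_int k4" using kk by blast
  note k = k1 k2 k3 k4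
  have "(U *v x)$i = of_int h * of_int (u1*k1 + u2*k2 + u3*k3 + u4*k4)"
    unfolding mv_entry u k by (simp add: algebra_simps)
  then show "\<exists>k::int. (U *v x)$i = of_int h * of_int k" by blast
qed

lemma mm_Ints: assumes "evI U" "\<forall>k. W$k$j \<in> \<int>" shows "(U ** W)$i$j \<in> \<int>"
proof -
  have "\<And>a b. U$a$b \<in> \<int>" using assms(1) unfolding evI_def by blast
  then show ?thesis unfolding mm_entry using assms(2) by (intro Ints_add Ints_mult) auto
qed

lemma rowperm_inv: assumes "bij (\<tau>::4\<Rightarrow>4)" shows "rowperm (inv \<tau>) (rowperm \<tau> Y) = Y"
proof -
  have "\<tau> \<circ> inv \<tau> = id" using assms by (auto simp: fun_eq_iff bij_is_surj surj_f_inv_f)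
  then show ?thesis by (simp add: rowperm_comp rowperm_id)
qed

lemma cover_mat:
  fixes W :: "real^4^4" and g :: int
  assumes r: "relW W" and ints: "\<forall>i. W$i$2 \<in> \<int> \<and> W$i$3 \<in> \<int> \<and> W$i$4 \<in> \<int>"
    and gdv: "dvdv g (curv W)" and gmax: "\<forall>h::int. dvdv h (curv W) \<longrightarrow> h dvd g"
    and g1: "g \<ge> 1" and pos: "ssum (curv W) > 0"
  shows "\<exists>\<sigma> (p0::int) (q0::int) v. bij \<sigma> \<and> p0 \<in> {0,1} \<and> q0 \<in> {0,1} \<and>
          eqv W (rowperm \<sigma> (if v then BV (of_int g) (of_int p0) (of_int q0) else BH (of_int g) (of_int p0) (of_int q0)))"
proof -
  obtain U where U: "U \<in> G0" "\<forall>i. (U**W)$i$2 = 0 \<or> 2*(U**W)$i$2 = ssum (curv (U**W))"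
      "ssum (curv (U**W)) > 0"
    using reduce[OF r _ pos] ints by blast
  define Y where "Y = U ** W"
  define s where "s = ssum (curv Y)"
  have eU: "evI U" using G0_good[OF U(1)] unfolding good_def by blast
  have Ys: "\<forall>i. Y$i$2 = 0 \<or> 2*Y$i$2 = s" "s > 0" using U unfolding Y_def s_def by auto
  have Yint: "\<forall>i. Y$i$2 \<in> \<int> \<and> Y$i$3 \<in> \<int> \<and> Y$i$4 \<in> \<int>"
    unfolding Y_def using mm_Ints[OF eU] ints by blast
  have "\<exists>i. Y$i$2 \<noteq> 0"
  proof (rule ccontr)
    assume "\<not> ?thesis" then have "s = 0" unfolding s_def ssum_def by simp
    then show False using Ys by simp
  qed
  then obtain i0 where i0: "2 * Y$i0$2 = s" using Ys by blast
  obtain hi :: int where hi: "Y$i0$2 = of_int hi" using Yint Ints_cases by metis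
  have hpos: "hi > 0" using i0 hi Ys(2) by simp
  have ent: "\<forall>i. Y$i$2 = 0 \<or> Y$i$2 = of_int hi" using Ys i0 hi by auto
  have "dvdv g (curv Y)" unfolding Y_def curv_mult using dvdv_mv[OF eU gdv] .
  then obtain k where "Y$i0$2 = of_int g * of_int k" unfolding dvdv_def by auto
  then have "hi = g * k" using hi by (metis of_int_eq_iff of_int_mult)
  then have d1: "g dvd hi" by simp
  obtain V where V: "V \<in> G0" "V ** U = mat 1" using G0_inv[OF U(1)] by blast
  have eV: "evI V" using G0_good[OF V(1)] unfolding good_def by blast
  have "dvdv hi (curv Y)" unfolding dvdv_def
  proof
    fix i show "\<exists>k::int. curv Y $ i = of_int hi * of_int k"
      using ent[rule_format, of i] by (auto intro: exI[of _ 0] exI[of _ 1])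
  qed
  then have "dvdv hi (V *v curv Y)" by (rule dvdv_mv[OF eV])
  moreover have "V *v curv Y = curv W" unfolding Y_def curv_mult[symmetric] matrix_mul_assoc V(2) by simp
  ultimately have "hi dvd g" using gmax by simp
  then have hg: "hi = g" using d1 hpos g1 by (simp add: zdvd_antisym_nonneg)
  have ent2: "\<forall>i. (curv Y)$i = 0 \<or> (curv Y)$i = of_int g" using ent hg by simp
  have sum2: "(curv Y)$1 + (curv Y)$2 + (curv Y)$3 + (curv Y)$4 = 2 * of_int g"
    using i0 hi hg unfolding s_def ssum_def by simp
  have gpos: "(of_int g :: real) > 0" using g1 by simp
  obtain \<tau> :: "4 \<Rightarrow> 4" where tau0: "bij \<tau>" "curv Y $ (\<tau> 1) = 0" "curv Y $ (\<tau> 2) = 0"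
      "curv Y $ (\<tau> 3) = of_int g" "curv Y $ (\<tau> 4) = of_int g"
    using sort_pattern[OF ent2 sum2 gpos] by blast
  have tau: "bij \<tau>" "Y$(\<tau> 1)$2 = 0" "Y$(\<tau> 2)$2 = 0" "Y$(\<tau> 3)$2 = of_int g" "Y$(\<tau> 4)$2 = of_int g"
    using tau0 by simp_all
  define Z where "Z = rowperm \<tau> Y"
  have rZ: "relW Z" unfolding Z_def Y_def using relW_rowperm[OF tau(1) relW_G0[OF U(1) r]] .
  have iZ3: "\<forall>i. Z$i$3 \<in> \<int>" and iZ4: "\<forall>i. Z$i$4 \<in> \<int>" unfolding Z_def using Yint by auto
  have cZ: "Z$1$2 = 0" "Z$2$2 = 0" "Z$3$2 = of_int g" "Z$4$2 = of_int g" unfolding Z_def using tau by auto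
  obtain \<pi> p q where pq: "bij \<pi>" "p \<in> \<int>" "q \<in> \<int>"
      "rowperm \<pi> Z = BH (of_int g) p q \<or> rowperm \<pi> Z = BV (of_int g) p q"
    using struct_lem[OF rZ iZ3 iZ4 cZ gpos] by blast
  obtain pi qi where pqi: "p = of_int pi" "q = of_int qi" using pq(2,3) Ints_cases by metis
  have g0: "(of_int g :: real) \<noteq> 0" using g1 by simp
  define v where "v = (rowperm \<pi> Z = BV (of_int g) p q)"
  define F where "F = (if v then BV (of_int g) else BH (of_int g))"
  have FZ: "rowperm \<pi> Z = F p q" using pq(4) unfolding F_def v_def by auto
  obtain \<kappa> where kap: "bij \<kappa>" "eqv (F p q) (rowperm \<kappa> (F (of_int (pi mod 2)) (of_int (qi mod 2))))"
  proof (cases v)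
    case True then have Fe: "F = BV (of_int g)" unfolding F_def by simp
    show ?thesis using that parityV[OF g0, of pi qi] unfolding Fe pqi by blast
  next
    case False then have Fe: "F = BH (of_int g)" unfolding F_def by simp
    show ?thesis using that parityH[OF g0, of pi qi] unfolding Fe pqi by blast
  qed
  have WY: "eqv W Y" unfolding eqv_def Y_def using U(1) by blast
  have YZ: "Y = rowperm (inv \<tau>) Z" unfolding Z_def using rowperm_inv[OF tau(1)] by simp
  have ZF: "Z = rowperm (inv \<pi>) (F p q)" using rowperm_inv[OF pq(1), of Z] FZ by simp
  have bi: "bij (inv \<tau>)" "bij (inv \<pi>)" using tau(1) pq(1) by (simp_all add: bij_imp_bij_inv)
  have "eqv W (rowperm (inv \<tau>) (rowperm (inv \<pi>) (F p q)))" using WY YZ ZF by simp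
  also have "eqv \<dots> (rowperm (inv \<tau>) (rowperm (inv \<pi>) (rowperm \<kappa> (F (of_int (pi mod 2)) (of_int (qi mod 2))))))"
    by (intro eqv_rowperm bi kap(2))
  finally have e: "eqv W (rowperm (\<kappa> \<circ> inv \<pi> \<circ> inv \<tau>) (F (of_int (pi mod 2)) (of_int (qi mod 2))))"
    by (simp only: rowperm_comp comp_assoc)
  have b: "bij (\<kappa> \<circ> inv \<pi> \<circ> inv \<tau>)" using kap(1) bi by (intro bij_comp) auto
  have m: "pi mod 2 \<in> {0,1}" "qi mod 2 \<in> {0,1}" by auto
  have Feq: "F (of_int (pi mod 2)) (of_int (qi mod 2)) = (if v then BV (of_int g) (of_int (pi mod 2)) (of_int (qi mod 2))
      else BH (of_int g) (of_int (pi mod 2)) (of_int (qi mod 2)))" unfolding F_def by simp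
  show ?thesis
    apply (rule exI[of _ "\<kappa> \<circ> inv \<pi> \<circ> inv \<tau>"], rule exI[of _ "pi mod 2"], rule exI[of _ "qi mod 2"], rule exI[of _ v])
    using e b m unfolding Feq by blast
qed


lemma Re_mult_cnj: "Re (z * cnj n) = Re z * Re n + Im z * Im n" by simp

lemma aug_circ: "aug_row (OCirc c r b) =
   (let k = (if b then 1/r else -(1/r)) in vector [k*((Re c)\<^sup>2 + (Im c)\<^sup>2) - 1/k, k, k*Re c, k*Im c])"
  by (simp add: Let_def cmod_power2)

lemma cmod_sq': "cmod z * cmod z = Re z * Re z + Im z * Im z"
  using cmod_power2[of z] by (simp add: power2_eq_square)

lemma aug_line: "aug_row (OLine n d) = vector [2*d, 0, Re n, Im n]" by simp

lemma beta_sym: "beta x y = beta y x" unfolding beta_def by (simp add: algebra_simps)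

lemma beta_self: assumes "wf_oc A" shows "beta (aug_row A) (aug_row A) = 1"
proof (cases A)
  case (OCirc c r b)
  then have r: "r > 0" using assms by simp
  show ?thesis unfolding OCirc aug_circ using r by (cases b) (simp_all add: beta_def Let_def field_simps power2_eq_square)
next
  case (OLine n d)
  then have "(Re n)\<^sup>2 + (Im n)\<^sup>2 = 1" using assms cmod_power2[of n] by simp
  then show ?thesis unfolding OLine aug_line by (simp add: beta_def power2_eq_square)
qed

lemma dist_sq: "(dist (c::complex) c')\<^sup>2 = (Re c - Re c')\<^sup>2 + (Im c - Im c')\<^sup>2"
  by (simp add: dist_norm cmod_power2)

lemma beta_TT: assumes "r > 0" "r' > 0" "dist c c' = r + r'"
  shows "beta (aug_row (OCirc c r True)) (aug_row (OCirc c' r' True)) = -1"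
proof -
  have E: "(Re c - Re c')\<^sup>2 + (Im c - Im c')\<^sup>2 = (r + r')\<^sup>2" using assms(3) dist_sq[of c c'] by simp
  have "beta (aug_row (OCirc c r True)) (aug_row (OCirc c' r' True))
     = (r\<^sup>2 + r'\<^sup>2 - ((Re c - Re c')\<^sup>2 + (Im c - Im c')\<^sup>2)) / (2*r*r')"
    using assms(1,2) by (simp add: beta_def field_simps power2_eq_square cmod_sq')
  also have "\<dots> = -1" unfolding E using assms(1,2) by (simp add: field_simps power2_eq_square)
  finally show ?thesis .
qed

lemma beta_TF: assumes "r > 0" "r' > 0" "dist c c' = r' - r"
  shows "beta (aug_row (OCirc c r True)) (aug_row (OCirc c' r' False)) = -1"
proof -
  have E: "(Re c - Re c')\<^sup>2 + (Im c - Im c')\<^sup>2 = (r' - r)\<^sup>2" using assms(3) dist_sq[of c c'] by simp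
  have "beta (aug_row (OCirc c r True)) (aug_row (OCirc c' r' False))
     = (((Re c - Re c')\<^sup>2 + (Im c - Im c')\<^sup>2) - r\<^sup>2 - r'\<^sup>2) / (2*r*r')"
    using assms(1,2) by (simp add: beta_def field_simps power2_eq_square cmod_sq')
  also have "\<dots> = -1" unfolding E using assms(1,2) by (simp add: field_simps power2_eq_square)
  finally show ?thesis .
qed

lemma beta_CL: assumes "r > 0" "Re (c * cnj n) = d - r"
  shows "beta (aug_row (OCirc c r True)) (aug_row (OLine n d)) = -1"
  using assms by (simp add: aug_circ beta_def field_simps)

lemma beta_LL: assumes "Re n * Re n' + Im n * Im n' = -1"
  shows "beta (aug_row (OLine n d)) (aug_row (OLine n' d')) = -1"
  using assms by (simp add: beta_def)


lemma dist_scale: "dist c (c + of_real t * w) = \<bar>t\<bar> * cmod w"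
  by (simp add: dist_norm norm_mult)

lemma Re_shift: "Re ((c + of_real t * w) * cnj n) = Re (c * cnj n) + t * Re (w * cnj n)"
  by (simp add: algebra_simps)

lemma unit_cnj: "cmod n = 1 \<Longrightarrow> Re (n * cnj n) = 1"
  using cmod_power2[of n] by (simp add: power2_eq_square)

lemma cc_TT_dist:
  fixes c c' p :: complex
  assumes r: "r > 0" "r' > 0" and p: "dist c p = r" "dist c' p = r'" and dj: "ball c r \<inter> ball c' r' = {}"
  shows "dist c c' = r + r'"
proof -
  have le: "dist c c' \<le> r + r'" using dist_triangle[of c c' p] p by (simp add: dist_commute)
  have ge: "\<not> dist c c' < r + r'"
  proof
    assume lt: "dist c c' < r + r'"
    define t where "t = r / (r + r')"
    define z where "z = c + of_real t * (c' - c)"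
    have t: "0 \<le> t" "t \<le> 1" unfolding t_def using r by auto
    have d1: "dist c z = t * dist c c'" unfolding z_def dist_scale using t by (simp add: dist_norm norm_minus_commute)
    have eq: "c' - z = of_real (1 - t) * (c' - c)" unfolding z_def by (simp add: algebra_simps)
    have "dist c' z = cmod (of_real (1 - t) * (c' - c))" by (simp only: dist_norm eq)
    also have "\<dots> = \<bar>1 - t\<bar> * cmod (c' - c)" by (simp only: norm_mult norm_of_real)
    also have "\<dots> = (1 - t) * dist c c'" using t by (simp add: dist_norm norm_minus_commute)
    finally have d2: "dist c' z = (1 - t) * dist c c'" .
    have tp: "t > 0" "1 - t > 0" unfolding t_def using r by (auto simp: field_simps)
    have B1: "t * (r + r') = r" and B2: "(1 - t) * (r + r') = r'" unfolding t_def using r by (auto simp: field_simps)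
    have "t * dist c c' < t * (r + r')" using lt tp by (intro mult_strict_left_mono) auto
    then have "dist c z < r" using d1 B1 by linarith
    moreover have "(1 - t) * dist c c' < (1 - t) * (r + r')" using lt tp by (intro mult_strict_left_mono) auto
    then have "dist c' z < r'" using d2 B2 by linarith
    ultimately show False using dj by auto
  qed
  from le ge show ?thesis by simp
qed

lemma cc_TF_dist:
  fixes c c' p :: complex
  assumes r: "r > 0" "r' > 0" and p: "dist c p = r" "dist c' p = r'" and dj: "ball c r \<inter> (- cball c' r') = {}"
  shows "dist c c' = r' - r"
proof -
  have ge: "dist c c' \<ge> r' - r" using dist_triangle[of c' p c] p by (simp add: dist_commute)
  have "ball c r \<subseteq> cball c' r'" using dj by auto
  then have "dist c c' + r \<le> r' \<or> r \<le> 0" using ball_subset_cball_iff by blast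
  then have "dist c c' + r \<le> r'" using r by linarith
  with ge show ?thesis by simp
qed

lemma cl_dist:
  assumes r: "r > 0" and n: "cmod n = 1" and p: "dist c p = r" "Re (p * cnj n) = d"
    and dj: "ball c r \<inter> {z. Re (z * cnj n) > d} = {}"
  shows "Re (c * cnj n) = d - r"
proof -
  have "\<bar>Re ((c - p) * cnj n)\<bar> \<le> cmod ((c - p) * cnj n)" by (rule abs_Re_le_cmod)
  also have "\<dots> = r" using n p by (simp add: norm_mult dist_norm)
  finally have a: "\<bar>Re (c * cnj n) - d\<bar> \<le> r" using p by (simp add: algebra_simps)
  have b: "Re (c * cnj n) + r \<le> d"
  proof (rule ccontr)
    assume nb: "\<not> ?thesis"
    show False
    proof (cases "Re (c * cnj n) > d")
      case True then have "c \<in> ball c r \<inter> {z. Re (z * cnj n) > d}" using r by simp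
      then show False using dj by blast
    next
      case False
      define t where "t = (r + (d - Re (c * cnj n)))/2"
      define z where "z = c + of_real t * n"
      have t: "0 \<le> t" "t < r" unfolding t_def using False nb r by auto
      have "dist c z < r" unfolding z_def dist_scale using t n by simp
      moreover have "Re (z * cnj n) > d"
        using nb by (simp only: z_def Re_shift unit_cnj[OF n] t_def mult_1_right) (simp add: field_simps)
      ultimately show False using dj by auto
    qed
  qed
  from a b show ?thesis by linarith
qed

lemma cF_line: assumes n: "cmod n = 1" shows "(- cball c r) \<inter> {z. Re (z * cnj n) > d} \<noteq> {}"
proof -
  define t where "t = \<bar>r\<bar> + \<bar>d\<bar> + cmod c + 1"
  define z where "z = c + of_real t * n"
  have t: "t > 0" unfolding t_def using abs_ge_zero[of r] abs_ge_zero[of d] norm_ge_zero[of c] by linarith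
  have "dist c z = t" unfolding z_def dist_scale using t n by simp
  then have "dist c z > r" unfolding t_def using abs_ge_self[of r] norm_ge_zero[of c] abs_ge_zero[of d] by linarith
  then have "z \<in> - cball c r" by simp
  moreover have "Re (z * cnj n) > d"
  proof -
    have "\<bar>Re (c * cnj n)\<bar> \<le> cmod (c * cnj n)" by (rule abs_Re_le_cmod)
    also have "\<dots> = cmod c" using n by (simp add: norm_mult)
    finally have "Re (c * cnj n) \<ge> - cmod c" by linarith
    then show ?thesis unfolding z_def Re_shift unit_cnj[OF n] t_def mult_1_right
      using abs_ge_self[of d] abs_ge_zero[of r] by linarith
  qed
  ultimately show ?thesis by blast
qed

lemma ll_dot:
  assumes n: "cmod n = 1" "cmod n' = 1" and nc: "\<forall>z. \<not> (Re (z * cnj n) = d \<and> Re (z * cnj n') = d')"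
    and dj: "{z. Re (z * cnj n) > d} \<inter> {z. Re (z * cnj n') > d'} = {}"
  shows "Re n * Re n' + Im n * Im n' = -1"
proof -
  define a where "a = Re n"
  define b where "b = Im n"
  define a' where "a' = Re n'"
  define b' where "b' = Im n'"
  have u: "a\<^sup>2 + b\<^sup>2 = 1" "a'\<^sup>2 + b'\<^sup>2 = 1" using n cmod_power2[of n] cmod_power2[of n'] unfolding a_def b_def a'_def b'_def by simp_all
  have det: "a*b' - b*a' = 0"
  proof (rule ccontr)
    assume dn: "a*b' - b*a' \<noteq> 0"
    define D where "D = a*b' - b*a'"
    have D: "D \<noteq> 0" using dn unfolding D_def .
    define z where "z = Complex ((d*b' - b*d')/D) ((a*d' - d*a')/D)"
    have "(d*b' - b*d')/D * a + (a*d' - d*a')/D * b = ((d*b' - b*d')*a + (a*d' - d*a')*b)/D"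
      by (simp add: add_divide_distrib)
    also have "(d*b' - b*d')*a + (a*d' - d*a')*b = d * D" unfolding D_def by (simp add: algebra_simps)
    finally have e1: "(d*b' - b*d')/D * a + (a*d' - d*a')/D * b = d" using D by simp
    have "(d*b' - b*d')/D * a' + (a*d' - d*a')/D * b' = ((d*b' - b*d')*a' + (a*d' - d*a')*b')/D"
      by (simp add: add_divide_distrib)
    also have "(d*b' - b*d')*a' + (a*d' - d*a')*b' = d' * D" unfolding D_def by (simp add: algebra_simps)
    finally have e2: "(d*b' - b*d')/D * a' + (a*d' - d*a')/D * b' = d'" using D by simp
    have "Re (z * cnj n) = d" unfolding z_def Re_mult_cnj using e1 unfolding a_def b_def by simp
    moreover have "Re (z * cnj n') = d'" unfolding z_def Re_mult_cnj using e2 unfolding a'_def b'_def by simp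
    ultimately show False using nc by blast
  qed
  have "(a*a' + b*b')\<^sup>2 + (a*b' - b*a')\<^sup>2 = (a\<^sup>2 + b\<^sup>2) * (a'\<^sup>2 + b'\<^sup>2)"
    by (simp add: power2_eq_square algebra_simps)
  then have "(a*a' + b*b')\<^sup>2 = 1\<^sup>2" using u det by simp
  then have pm: "a*a' + b*b' = 1 \<or> a*a' + b*b' = -1" using power2_eq_iff by blast
  have "a*a' + b*b' \<noteq> 1"
  proof
    assume e: "a*a' + b*b' = 1"
    have "(a - a')\<^sup>2 + (b - b')\<^sup>2 = (a\<^sup>2 + b\<^sup>2) + (a'\<^sup>2 + b'\<^sup>2) - 2*(a*a' + b*b')"
      by (simp add: power2_eq_square algebra_simps)
    also have "\<dots> = 0" using u e by simp
    finally have "a = a' \<and> b = b'" by (simp add: sum_power2_eq_zero_iff)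
    then have nn: "n' = n" unfolding a_def b_def a'_def b'_def by (simp add: complex_eq_iff)
    define z where "z = of_real (\<bar>d\<bar> + \<bar>d'\<bar> + 1) * n"
    have "Re (z * cnj n) = (\<bar>d\<bar> + \<bar>d'\<bar> + 1) * Re (n * cnj n)" unfolding z_def by (simp add: mult.assoc)
    then have "Re (z * cnj n) = \<bar>d\<bar> + \<bar>d'\<bar> + 1" using unit_cnj[OF n(1)] by simp
    then have "z \<in> {z. Re (z * cnj n) > d} \<inter> {z. Re (z * cnj n') > d'}" using nn by auto
    then show False using dj by blast
  qed
  with pm show ?thesis unfolding a_def b_def a'_def b'_def by simp
qed


lemma tangent_sym: "tangent A B \<Longrightarrow> tangent B A"
  unfolding tangent_def by blast

lemma pair_beta:
  assumes wA: "wf_oc A" and wB: "wf_oc B" and t: "tangent A B"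
    and dj: "oc_interior A \<inter> oc_interior B = {}"
  shows "beta (aug_row A) (aug_row B) = -1"
proof -
  obtain p where pA: "p \<in> oc_boundary A" and pB: "p \<in> oc_boundary B" and uq: "\<And>q. q \<in> oc_boundary A \<Longrightarrow> q \<in> oc_boundary B \<Longrightarrow> q = p"
    using t unfolding tangent_def by blast
  show ?thesis
  proof (cases A)
    case (OCirc c r b)
    have r: "r > 0" using wA OCirc by simp
    obtain z where z: "p = Some z" "dist c z = r" using pA OCirc by auto
    show ?thesis
    proof (cases B)
      case (OCirc c' r' b')
      have r': "r' > 0" using wB OCirc by simp
      have z': "dist c' z = r'" using pB OCirc z by auto
      show ?thesis
      proof (cases b)
        case True
        show ?thesis
        proof (cases b')
          case True
          have "ball c r \<inter> ball c' r' = {}" using dj \<open>A = _\<close> \<open>B = _\<close> \<open>b\<close> True by auto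
          then have "dist c c' = r + r'" using cc_TT_dist[OF r r' z(2) z'] by simp
          then show ?thesis using beta_TT[OF r r'] \<open>A = _\<close> \<open>B = _\<close> \<open>b\<close> True by simp
        next
          case False
          have "ball c r \<inter> (- cball c' r') = {}" using dj \<open>A = _\<close> \<open>B = _\<close> \<open>b\<close> False by auto
          then have "dist c c' = r' - r" using cc_TF_dist[OF r r' z(2) z'] by simp
          then show ?thesis using beta_TF[OF r r'] \<open>A = _\<close> \<open>B = _\<close> \<open>b\<close> False by simp
        qed
      next
        case False
        show ?thesis
        proof (cases b')
          case True
          have "ball c' r' \<inter> (- cball c r) = {}" using dj \<open>A = _\<close> \<open>B = _\<close> \<open>\<not> b\<close> True by auto
          then have "dist c' c = r - r'" using cc_TF_dist[OF r' r z' z(2)] by simp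
          then have "beta (aug_row B) (aug_row A) = -1" using beta_TF[OF r' r] \<open>A = _\<close> \<open>B = _\<close> \<open>\<not> b\<close> True by simp
          then show ?thesis by (simp add: beta_sym)
        next
          case False
          have "None \<in> oc_interior A \<inter> oc_interior B" using \<open>A = _\<close> \<open>B = _\<close> \<open>\<not> b\<close> False by simp
          then show ?thesis using dj by blast
        qed
      qed
    next
      case (OLine n d)
      have n: "cmod n = 1" using wB OLine by simp
      have zl: "Re (z * cnj n) = d" using pB OLine z by auto
      show ?thesis
      proof (cases b)
        case True
        have "ball c r \<inter> {z. Re (z * cnj n) > d} = {}" using dj \<open>A = _\<close> \<open>B = _\<close> True by auto
        then have "Re (c * cnj n) = d - r" using cl_dist[OF r n z(2) zl] by simp
        then show ?thesis using beta_CL[OF r] \<open>A = _\<close> \<open>B = _\<close> True by simp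
      next
        case False
        obtain w where "w \<in> (- cball c r) \<inter> {z. Re (z * cnj n) > d}" using cF_line[OF n] by blast
        then have "Some w \<in> oc_interior A \<inter> oc_interior B" using \<open>A = _\<close> \<open>B = _\<close> False by auto
        then show ?thesis using dj by blast
      qed
    qed
  next
    case (OLine n d)
    have n: "cmod n = 1" using wA OLine by simp
    show ?thesis
    proof (cases B)
      case (OCirc c r b)
      have r: "r > 0" using wB OCirc by simp
      obtain z where z: "p = Some z" "dist c z = r" using pB OCirc by auto
      have zl: "Re (z * cnj n) = d" using pA OLine z by auto
      show ?thesis
      proof (cases b)
        case True
        have "ball c r \<inter> {z. Re (z * cnj n) > d} = {}" using dj \<open>A = _\<close> \<open>B = _\<close> True by auto
        then have "Re (c * cnj n) = d - r" using cl_dist[OF r n z(2) zl] by simp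
        then have "beta (aug_row B) (aug_row A) = -1" using beta_CL[OF r] \<open>A = _\<close> \<open>B = _\<close> True by simp
        then show ?thesis by (simp add: beta_sym)
      next
        case False
        obtain w where "w \<in> (- cball c r) \<inter> {z. Re (z * cnj n) > d}" using cF_line[OF n] by blast
        then have "Some w \<in> oc_interior A \<inter> oc_interior B" using \<open>A = _\<close> \<open>B = _\<close> False by auto
        then show ?thesis using dj by blast
      qed
    next
      case (OLine n' d')
      have n': "cmod n' = 1" using wB OLine by simp
      have pN: "p = None" using uq[of None] \<open>A = _\<close> \<open>B = _\<close> by simp
      have nc: "\<forall>z. \<not> (Re (z * cnj n) = d \<and> Re (z * cnj n') = d')"
      proof (intro allI notI)
        fix z assume "Re (z * cnj n) = d \<and> Re (z * cnj n') = d'"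
        then have "Some z = p" using uq[of "Some z"] \<open>A = OLine n d\<close> \<open>B = _\<close> by simp
        then show False using pN by simp
      qed
      have "{z. Re (z * cnj n) > d} \<inter> {z. Re (z * cnj n') > d'} = {}" using dj \<open>A = _\<close> \<open>B = _\<close> by auto
      then have "Re n * Re n' + Im n * Im n' = -1" using ll_dot[OF n n' nc] by simp
      then show ?thesis using beta_LL \<open>A = _\<close> \<open>B = _\<close> by simp
    qed
  qed
qed

lemma W_row: "W_mat D $ i = aug_row (D i)" by (simp add: W_mat_def)

lemma pos_relW: assumes "pos_descartes D" shows "relW (W_mat D)"
  unfolding relW_iff W_row
proof (intro allI)
  fix i j
  show "beta (aug_row (D i)) (aug_row (D j)) = (if i = j then 1 else -1)"
  proof (cases "i = j")
    case True then show ?thesis using assms beta_self unfolding pos_descartes_def by simp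
  next
    case False
    have "wf_oc (D i)" "wf_oc (D j)" "tangent (D i) (D j)" "oc_interior (D i) \<inter> oc_interior (D j) = {}"
      using assms False unfolding pos_descartes_def by auto
    then show ?thesis using pair_beta False by simp
  qed
qed

lemma aug_row_reverse: "aug_row (oc_reverse C) = - aug_row C"
proof (cases C)
  case (OCirc c r b) then show ?thesis by (cases b) (simp_all add: vec_eq_iff all4 Let_def)
next
  case (OLine n d) then show ?thesis by (simp add: vec_eq_iff all4)
qed

lemma W_reverse: "W_mat (oc_reverse \<circ> D) = - W_mat D"
  by (simp add: vec_eq_iff W_row aug_row_reverse)

lemma oo_relW: assumes "oo_descartes D" shows "relW (W_mat D)"
  using assms unfolding oo_descartes_def
proof
  assume "pos_descartes D" then show ?thesis by (rule pos_relW)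
next
  assume "pos_descartes (oc_reverse \<circ> D)"
  then have "relW (- W_mat D)" using pos_relW W_reverse by metis
  then show ?thesis using relW_neg by fastforce
qed


lemma TT_ok:
  fixes c c' :: complex
  assumes r: "r > 0" "r' > 0" and d: "dist c c' = r + r'"
  shows "tangent (OCirc c r True) (OCirc c' r' True) \<and> oc_interior (OCirc c r True) \<inter> oc_interior (OCirc c' r' True) = {}"
proof
  define t where "t = r / (r + r')"
  define z0 where "z0 = c + of_real t * (c' - c)"
  have t: "0 \<le> t" "t \<le> 1" unfolding t_def using r by auto
  have "dist c z0 = t * dist c c'" unfolding z0_def dist_scale using t by (simp add: dist_norm norm_minus_commute)
  then have d1: "dist c z0 = r" unfolding t_def d using r by simp
  have eq: "c' - z0 = of_real (1 - t) * (c' - c)" unfolding z0_def by (simp add: algebra_simps)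
  have "dist c' z0 = cmod (of_real (1 - t) * (c' - c))" by (simp only: dist_norm eq)
  also have "\<dots> = \<bar>1 - t\<bar> * cmod (c' - c)" by (simp only: norm_mult norm_of_real)
  also have "\<dots> = (1 - t) * dist c c'" using t by (simp add: dist_norm norm_minus_commute)
  also have "\<dots> = r'" unfolding t_def d using r by (simp add: field_simps)
  finally have d2: "dist c' z0 = r'" .
  have uq: "z = z0" if "dist c z = r" "dist c' z = r'" for z
  proof -
    have col: "\<And>w. dist c w = r \<Longrightarrow> dist c' w = r' \<Longrightarrow> (r + r') *\<^sub>R w = r' *\<^sub>R c + r *\<^sub>R c'"
    proof -
      fix w assume w: "dist c w = r" "dist c' w = r'"
      have "dist c c' = dist c w + dist w c'" using w d by (simp add: dist_commute)
      then have "norm (c - w) *\<^sub>R (w - c') = norm (w - c') *\<^sub>R (c - w)" using dist_triangle_eq by blast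
      then have "r *\<^sub>R (w - c') = r' *\<^sub>R (c - w)" using w by (simp add: dist_norm norm_minus_commute)
      then show "(r + r') *\<^sub>R w = r' *\<^sub>R c + r *\<^sub>R c'" by (simp add: algebra_simps)
    qed
    have "(r + r') *\<^sub>R z = (r + r') *\<^sub>R z0" using col[OF that] col[OF d1 d2] by simp
    then show ?thesis using r by simp
  qed
  show "tangent (OCirc c r True) (OCirc c' r' True)" unfolding tangent_def
  proof (rule ex1I[of _ "Some z0"])
    show "Some z0 \<in> oc_boundary (OCirc c r True) \<and> Some z0 \<in> oc_boundary (OCirc c' r' True)" using d1 d2 by simp
  next
    fix p assume "p \<in> oc_boundary (OCirc c r True) \<and> p \<in> oc_boundary (OCirc c' r' True)"
    then obtain z where "p = Some z" "dist c z = r" "dist c' z = r'" by auto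
    then show "p = Some z0" using uq by simp
  qed
  have "ball c r \<inter> ball c' r' = {}" using d by (intro disjoint_ballI) simp
  then show "oc_interior (OCirc c r True) \<inter> oc_interior (OCirc c' r' True) = {}" by auto
qed

lemma LC_ok:
  assumes r: "r > 0" and n: "cmod n = 1" and e: "Re (c * cnj n) = d - r"
  shows "tangent (OLine n d) (OCirc c r True) \<and> oc_interior (OLine n d) \<inter> oc_interior (OCirc c r True) = {}"
proof
  define z0 where "z0 = c + of_real r * n"
  have d1: "dist c z0 = r" unfolding z0_def dist_scale using r n by simp
  have l1: "Re (z0 * cnj n) = d" unfolding z0_def Re_shift unit_cnj[OF n] using e by simp
  have uq: "z = z0" if "dist c z = r" "Re (z * cnj n) = d" for z
  proof -
    define w where "w = z - c"
    have w1: "(Re w)\<^sup>2 + (Im w)\<^sup>2 = r\<^sup>2" using that(1) unfolding w_def by (simp add: dist_sq[symmetric] dist_commute)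
    have w2: "Re w * Re n + Im w * Im n = r" using that(2) e unfolding w_def by (simp add: algebra_simps)
    have n1: "(Re n)\<^sup>2 + (Im n)\<^sup>2 = 1" using n cmod_power2[of n] by simp
    have "(Re w - r * Re n)\<^sup>2 + (Im w - r * Im n)\<^sup>2 = ((Re w)\<^sup>2 + (Im w)\<^sup>2) - 2*r*(Re w * Re n + Im w * Im n) + r\<^sup>2*((Re n)\<^sup>2 + (Im n)\<^sup>2)"
      by (simp add: power2_eq_square algebra_simps)
    also have "\<dots> = 0" unfolding w1 w2 n1 by (simp add: power2_eq_square)
    finally have "Re w = r * Re n \<and> Im w = r * Im n" by (simp add: sum_power2_eq_zero_iff)
    then show ?thesis unfolding z0_def w_def by (simp add: complex_eq_iff)
  qed
  show "tangent (OLine n d) (OCirc c r True)" unfolding tangent_def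
  proof (rule ex1I[of _ "Some z0"])
    show "Some z0 \<in> oc_boundary (OLine n d) \<and> Some z0 \<in> oc_boundary (OCirc c r True)" using d1 l1 by simp
  next
    fix p assume h: "p \<in> oc_boundary (OLine n d) \<and> p \<in> oc_boundary (OCirc c r True)"
    then obtain z where "p = Some z" "dist c z = r" by auto
    moreover have "Re (z * cnj n) = d" using h \<open>p = Some z\<close> by auto
    ultimately show "p = Some z0" using uq by simp
  qed
  have "{z. Re (z * cnj n) > d} \<inter> ball c r = {}"
  proof (rule ccontr)
    assume "\<not> ?thesis"
    then obtain z where z: "Re (z * cnj n) > d" "dist c z < r" by auto
    have "\<bar>Re ((z - c) * cnj n)\<bar> \<le> cmod ((z - c) * cnj n)" by (rule abs_Re_le_cmod)
    also have "\<dots> = dist c z" using n by (simp add: norm_mult dist_norm norm_minus_commute)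
    finally have "Re (z * cnj n) - Re (c * cnj n) \<le> dist c z" by (simp add: algebra_simps)
    then show False using z e by linarith
  qed
  then show "oc_interior (OLine n d) \<inter> oc_interior (OCirc c r True) = {}" by auto
qed

lemma LL_ok:
  assumes n: "cmod n = 1" and dd: "d + d' > 0"
  shows "tangent (OLine n d) (OLine (-n) d') \<and> oc_interior (OLine n d) \<inter> oc_interior (OLine (-n) d') = {}"
proof
  show "tangent (OLine n d) (OLine (-n) d')" unfolding tangent_def
  proof (rule ex1I[of _ None])
    fix p assume h: "p \<in> oc_boundary (OLine n d) \<and> p \<in> oc_boundary (OLine (-n) d')"
    show "p = None"
    proof (rule ccontr)
      assume "p \<noteq> None"
      then obtain z where "p = Some z" by auto
      then have "Re (z * cnj n) = d" "Re (z * cnj (-n)) = d'" using h by auto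
      then show False using dd by simp
    qed
  qed simp
  show "oc_interior (OLine n d) \<inter> oc_interior (OLine (-n) d') = {}"
  proof (rule ccontr)
    assume "\<not> ?thesis"
    then obtain z where "Re (z * cnj n) > d" "Re (z * cnj (-n)) > d'" by auto
    then show False using dd by simp
  qed
qed


definition TD :: "ocircle \<Rightarrow> ocircle \<Rightarrow> bool" where
  "TD A B \<longleftrightarrow> tangent A B \<and> oc_interior A \<inter> oc_interior B = {}"

lemma TD_sym: "TD A B \<Longrightarrow> TD B A"
  unfolding TD_def using tangent_sym by blast

lemma pos_from6:
  assumes "\<forall>i. wf_oc (D i)" "TD (D 1) (D 2)" "TD (D 1) (D 3)" "TD (D 1) (D 4)" "TD (D 2) (D 3)"
    "TD (D 2) (D 4)" "TD (D 3) (D 4)"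
  shows "pos_descartes D"
proof -
  have "\<And>i j. i \<noteq> j \<Longrightarrow> TD (D i) (D j)"
  proof -
    fix i j :: 4 assume ij: "i \<noteq> j"
    have "i = 1 \<or> i = 2 \<or> i = 3 \<or> i = 4" "j = 1 \<or> j = 2 \<or> j = 3 \<or> j = 4" by (rule exhaust_4)+
    then show "TD (D i) (D j)" using ij assms(2-7) TD_sym by auto
  qed
  then show ?thesis using assms(1) unfolding pos_descartes_def TD_def by blast
qed

definition baseH :: "real \<Rightarrow> real \<Rightarrow> real \<Rightarrow> config" where
  "baseH g p q = (\<lambda>i. if i = 1 then OLine \<i> ((q+1)/g) else if i = 2 then OLine (-\<i>) ((1-q)/g)
     else if i = 3 then OCirc (Complex (p/g) (q/g)) (1/g) True else OCirc (Complex ((p-2)/g) (q/g)) (1/g) True)"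

definition baseV :: "real \<Rightarrow> real \<Rightarrow> real \<Rightarrow> config" where
  "baseV g p q = (\<lambda>i. if i = 1 then OLine 1 ((p+1)/g) else if i = 2 then OLine (-1) ((1-p)/g)
     else if i = 3 then OCirc (Complex (p/g) (q/g)) (1/g) True else OCirc (Complex (p/g) ((q-2)/g)) (1/g) True)"

lemma baseH_app: "baseH g p q 1 = OLine \<i> ((q+1)/g)" "baseH g p q 2 = OLine (-\<i>) ((1-q)/g)"
  "baseH g p q 3 = OCirc (Complex (p/g) (q/g)) (1/g) True" "baseH g p q 4 = OCirc (Complex ((p-2)/g) (q/g)) (1/g) True"
  by (simp_all add: baseH_def)

lemma baseV_app: "baseV g p q 1 = OLine 1 ((p+1)/g)" "baseV g p q 2 = OLine (-1) ((1-p)/g)"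
  "baseV g p q 3 = OCirc (Complex (p/g) (q/g)) (1/g) True" "baseV g p q 4 = OCirc (Complex (p/g) ((q-2)/g)) (1/g) True"
  by (simp_all add: baseV_def)

lemma dist_from_sq: assumes "(Re c - Re c')\<^sup>2 + (Im c - Im c')\<^sup>2 = x\<^sup>2" "x \<ge> 0" shows "dist c c' = x"
  using assms dist_sq[of c c'] power2_eq_iff_nonneg[of "dist c c'" x] by simp

lemma baseH_pos: assumes g: "g > 0" shows "pos_descartes (baseH g p q)"
proof (rule pos_from6)
  have r: "1/g > 0" using g by simp
  show "\<forall>i. wf_oc (baseH g p q i)" using g by (simp add: baseH_def)
  show "TD (baseH g p q 1) (baseH g p q 2)" unfolding baseH_app TD_def
    by (rule LL_ok) (use g in \<open>simp_all add: field_simps\<close>)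
  show "TD (baseH g p q 1) (baseH g p q 3)" unfolding baseH_app TD_def
    by (rule LC_ok[OF r]) (use g in \<open>simp_all add: field_simps\<close>)
  show "TD (baseH g p q 1) (baseH g p q 4)" unfolding baseH_app TD_def
    by (rule LC_ok[OF r]) (use g in \<open>simp_all add: field_simps\<close>)
  show "TD (baseH g p q 2) (baseH g p q 3)" unfolding baseH_app TD_def
    by (rule LC_ok[OF r]) (use g in \<open>simp_all add: field_simps\<close>)
  show "TD (baseH g p q 2) (baseH g p q 4)" unfolding baseH_app TD_def
    by (rule LC_ok[OF r]) (use g in \<open>simp_all add: field_simps\<close>)
  show "TD (baseH g p q 3) (baseH g p q 4)" unfolding baseH_app TD_def
    by (rule TT_ok[OF r r], rule dist_from_sq) (use g in \<open>simp_all add: field_simps power2_eq_square\<close>)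
qed

lemma baseV_pos: assumes g: "g > 0" shows "pos_descartes (baseV g p q)"
proof (rule pos_from6)
  have r: "1/g > 0" using g by simp
  show "\<forall>i. wf_oc (baseV g p q i)" using g by (simp add: baseV_def)
  show "TD (baseV g p q 1) (baseV g p q 2)" unfolding baseV_app TD_def
    by (rule LL_ok) (use g in \<open>simp_all add: field_simps\<close>)
  show "TD (baseV g p q 1) (baseV g p q 3)" unfolding baseV_app TD_def
    by (rule LC_ok[OF r]) (use g in \<open>simp_all add: field_simps\<close>)
  show "TD (baseV g p q 1) (baseV g p q 4)" unfolding baseV_app TD_def
    by (rule LC_ok[OF r]) (use g in \<open>simp_all add: field_simps\<close>)
  show "TD (baseV g p q 2) (baseV g p q 3)" unfolding baseV_app TD_def
    by (rule LC_ok[OF r]) (use g in \<open>simp_all add: field_simps\<close>)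
  show "TD (baseV g p q 2) (baseV g p q 4)" unfolding baseV_app TD_def
    by (rule LC_ok[OF r]) (use g in \<open>simp_all add: field_simps\<close>)
  show "TD (baseV g p q 3) (baseV g p q 4)" unfolding baseV_app TD_def
    by (rule TT_ok[OF r r], rule dist_from_sq) (use g in \<open>simp_all add: field_simps power2_eq_square\<close>)
qed

lemma cmod_Complex_sq: "(cmod (Complex a b))\<^sup>2 = a\<^sup>2 + b\<^sup>2"
  using cmod_power2[of "Complex a b"] by simp

lemma W_baseH: assumes "g > 0" shows "W_mat (baseH g p q) = BH g p q"
  using assms by (simp add: mat_eq4 all4 W_row baseH_app BH_def Let_def cmod_Complex_sq del: complex_norm)
    (simp add: field_simps power2_eq_square)

lemma W_baseV: assumes "g > 0" shows "W_mat (baseV g p q) = BV g p q"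
  using assms by (simp add: mat_eq4 all4 W_row baseV_app BV_def Let_def cmod_Complex_sq del: complex_norm)
    (simp add: field_simps power2_eq_square)


lemma cc_aug: "cc_row C $ 1 = aug_row C $ 2" "cc_row C $ 2 = aug_row C $ 3" "cc_row C $ 3 = aug_row C $ 4"
  by (cases C; simp add: Let_def)+

lemma curv_aug: "oc_curv C = aug_row C $ 2"
  by (cases C) (simp_all add: Let_def)

lemma SI_iff: "strongly_integral D \<longleftrightarrow> (\<forall>i. W_mat D $ i $ 2 \<in> \<int> \<and> W_mat D $ i $ 3 \<in> \<int> \<and> W_mat D $ i $ 4 \<in> \<int>)"
  unfolding strongly_integral_def M_mat_def W_row by (simp add: forall_3 cc_aug)

lemma divisor_W: "divisor D = Gcd (range (\<lambda>i. \<lfloor>W_mat D $ i $ 2\<rfloor>))"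
  unfolding divisor_def W_row curv_aug ..

lemma oc_reverse_twice [simp]: "oc_reverse (oc_reverse C) = C"
  by (cases C) simp_all

lemma oc_boundary_reverse [simp]: "oc_boundary (oc_reverse C) = oc_boundary C"
proof (cases C)
  case (OLine n d)
  have "\<And>z. (Re (z * cnj (-n)) = - d) = (Re (z * cnj n) = d)" by auto
  then show ?thesis using OLine by simp
qed simp

lemma wf_reverse [simp]: "wf_oc (oc_reverse C) = wf_oc C"
  by (cases C) simp_all

lemma pos_perm: assumes "pos_descartes D" "bij \<sigma>" shows "pos_descartes (D \<circ> \<sigma>)"
  using assms unfolding pos_descartes_def by (simp add: bij_is_inj inj_eq)

lemma oo_perm: assumes "oo_descartes D" "bij \<sigma>" shows "oo_descartes (D \<circ> \<sigma>)"
  using assms pos_perm[of _ \<sigma>] unfolding oo_descartes_def by (metis comp_assoc)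

lemma oo_reverse: "oo_descartes (oc_reverse \<circ> D) = oo_descartes D"
proof -
  have "oc_reverse \<circ> (oc_reverse \<circ> D) = D" by (simp add: fun_eq_iff)
  then show ?thesis unfolding oo_descartes_def by metis
qed

lemma W_perm: "W_mat (D \<circ> \<sigma>) = rowperm \<sigma> (W_mat D)"
  by (simp add: vec_eq_iff W_row)

lemma orbit_mem_eqv:
  assumes "oo_descartes D" "eqv (W_mat R) (W_mat D)" shows "D \<in> superA_orbit R"
  using assms unfolding superA_orbit_def eqv_def superA_eq by (auto dest: sym)

lemma orbit_eqv: "D \<in> superA_orbit R \<Longrightarrow> oo_descartes D \<and> eqv (W_mat R) (W_mat D)"
  unfolding superA_orbit_def eqv_def superA_eq by (auto dest: sym)

lemma orbit_same: assumes "D \<in> superA_orbit R" shows "superA_orbit D = superA_orbit R"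
proof -
  have e: "eqv (W_mat R) (W_mat D)" using orbit_eqv[OF assms] by blast
  show ?thesis
  proof (intro set_eqI iffI)
    fix X assume "X \<in> superA_orbit D"
    then show "X \<in> superA_orbit R" using orbit_eqv orbit_mem_eqv eqv_trans e by blast
  next
    fix X assume "X \<in> superA_orbit R"
    then show "X \<in> superA_orbit D" using orbit_eqv orbit_mem_eqv eqv_trans eqv_sym e by blast
  qed
qed

lemma self_orbit: "oo_descartes R \<Longrightarrow> R \<in> superA_orbit R"
  using orbit_mem_eqv eqv_refl by blast

lemma orbit_perm: assumes "D' \<in> superA_orbit X" "bij \<sigma>" shows "D' \<circ> \<sigma> \<in> superA_orbit (X \<circ> \<sigma>)"
proof -
  have "oo_descartes D'" "eqv (W_mat X) (W_mat D')" using orbit_eqv[OF assms(1)] by auto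
  then show ?thesis using orbit_mem_eqv oo_perm eqv_rowperm assms(2) W_perm by metis
qed

lemma orbit_rev: assumes "D' \<in> superA_orbit X" shows "oc_reverse \<circ> D' \<in> superA_orbit (oc_reverse \<circ> X)"
proof -
  have "oo_descartes D'" "eqv (W_mat X) (W_mat D')" using orbit_eqv[OF assms(1)] by auto
  then show ?thesis using orbit_mem_eqv oo_reverse eqv_neg W_reverse by metis
qed

lemma sp_perm_sub: assumes "bij \<sigma>" shows "super_packing X \<subseteq> super_packing (X \<circ> \<sigma>)"
proof
  fix P assume "P \<in> super_packing X"
  then obtain D' i where D': "D' \<in> superA_orbit X" "P = oc_boundary (D' i)" unfolding super_packing_def by blast
  have "D' \<circ> \<sigma> \<in> superA_orbit (X \<circ> \<sigma>)" using orbit_perm[OF D'(1) assms] .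
  moreover have "P = oc_boundary ((D' \<circ> \<sigma>) (inv \<sigma> i))" using D'(2) assms by (simp add: bij_is_surj surj_f_inv_f)
  ultimately show "P \<in> super_packing (X \<circ> \<sigma>)" unfolding super_packing_def by blast
qed

lemma sp_perm: assumes "bij \<sigma>" shows "super_packing (X \<circ> \<sigma>) = super_packing X"
proof
  show "super_packing X \<subseteq> super_packing (X \<circ> \<sigma>)" by (rule sp_perm_sub[OF assms])
  have "super_packing (X \<circ> \<sigma>) \<subseteq> super_packing ((X \<circ> \<sigma>) \<circ> inv \<sigma>)"
    by (rule sp_perm_sub[OF bij_imp_bij_inv[OF assms]])
  also have "(X \<circ> \<sigma>) \<circ> inv \<sigma> = X" using assms by (simp add: fun_eq_iff bij_is_surj surj_f_inv_f)
  finally show "super_packing (X \<circ> \<sigma>) \<subseteq> super_packing X" .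
qed

lemma sp_rev_sub: "super_packing X \<subseteq> super_packing (oc_reverse \<circ> X)"
proof
  fix P assume "P \<in> super_packing X"
  then obtain D' i where D': "D' \<in> superA_orbit X" "P = oc_boundary (D' i)" unfolding super_packing_def by blast
  have "oc_reverse \<circ> D' \<in> superA_orbit (oc_reverse \<circ> X)" using orbit_rev[OF D'(1)] .
  moreover have "P = oc_boundary ((oc_reverse \<circ> D') i)" using D'(2) by simp
  ultimately show "P \<in> super_packing (oc_reverse \<circ> X)" unfolding super_packing_def by blast
qed

lemma sp_rev: "super_packing (oc_reverse \<circ> X) = super_packing X"
proof
  show "super_packing X \<subseteq> super_packing (oc_reverse \<circ> X)" by (rule sp_rev_sub)
  have "super_packing (oc_reverse \<circ> X) \<subseteq> super_packing (oc_reverse \<circ> (oc_reverse \<circ> X))" by (rule sp_rev_sub)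
  also have "oc_reverse \<circ> (oc_reverse \<circ> X) = X" by (simp add: fun_eq_iff)
  finally show "super_packing (oc_reverse \<circ> X) \<subseteq> super_packing X" .
qed

lemma sp_orbit: "D \<in> superA_orbit R \<Longrightarrow> super_packing D = super_packing R"
  unfolding super_packing_def using orbit_same by simp

subsection \<open>Representatives\<close>

type_synonym cls = "bool \<times> bool \<times> bool"

definition bv :: "bool \<Rightarrow> real" where "bv a = (if a then 1 else 0)"

definition baseC :: "int \<Rightarrow> cls \<Rightarrow> config" where
  "baseC g c = (case c of (v, a, b) \<Rightarrow> (if v then baseV else baseH) (of_int g) (bv a) (bv b))"

definition Bc :: "int \<Rightarrow> cls \<Rightarrow> real^4^4" where
  "Bc g c = (case c of (v, a, b) \<Rightarrow> (if v then BV else BH) (of_int g) (bv a) (bv b))"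

definition rep :: "int \<Rightarrow> cls \<Rightarrow> (4 \<Rightarrow> 4) \<Rightarrow> bool \<Rightarrow> config" where
  "rep g c \<sigma> e = (if e then baseC g c \<circ> \<sigma> else oc_reverse \<circ> (baseC g c \<circ> \<sigma>))"

lemma W_baseC: "g \<ge> 1 \<Longrightarrow> W_mat (baseC g c) = Bc g c"
  unfolding baseC_def Bc_def by (cases c) (simp add: W_baseH W_baseV)

lemma pos_baseC: "g \<ge> 1 \<Longrightarrow> pos_descartes (baseC g c)"
  unfolding baseC_def by (cases c) (simp add: baseH_pos baseV_pos)

lemma W_rep: "g \<ge> 1 \<Longrightarrow> W_mat (rep g c \<sigma> e) = (if e then rowperm \<sigma> (Bc g c) else - rowperm \<sigma> (Bc g c))"
  unfolding rep_def by (simp add: W_reverse W_perm W_baseC)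

lemma oo_rep: assumes "g \<ge> 1" "bij \<sigma>" shows "oo_descartes (rep g c \<sigma> e)"
proof -
  have "oo_descartes (baseC g c \<circ> \<sigma>)" using pos_perm[OF pos_baseC[OF assms(1)] assms(2)] unfolding oo_descartes_def by blast
  then show ?thesis unfolding rep_def using oo_reverse by simp
qed

lemma sp_rep: assumes "bij \<sigma>" shows "super_packing (rep g c \<sigma> e) = super_packing (baseC g c)"
  unfolding rep_def using sp_perm[OF assms] sp_rev by simp


lemma Bc_col2: "Bc g c $ m $ 2 = (if m = 1 \<or> m = 2 then 0 else of_int g)"
proof -
  have "m = 1 \<or> m = 2 \<or> m = 3 \<or> m = 4" by (rule exhaust_4)
  then show ?thesis unfolding Bc_def by (cases c) (auto simp: BH_def BV_def)
qed

lemma bv_Ints [simp]: "bv a \<in> \<int>" by (simp add: bv_def)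

lemma Bc_ints: "Bc g c $ m $ 2 \<in> \<int> \<and> Bc g c $ m $ 3 \<in> \<int> \<and> Bc g c $ m $ 4 \<in> \<int>"
proof -
  have "m = 1 \<or> m = 2 \<or> m = 3 \<or> m = 4" by (rule exhaust_4)
  then show ?thesis unfolding Bc_def by (cases c) (auto simp: BH_def BV_def)
qed

lemma Wrep_entry: "g \<ge> 1 \<Longrightarrow> W_mat (rep g c \<sigma> e) $ i $ j = (if e then 1 else -1) * Bc g c $ (\<sigma> i) $ j"
  by (simp add: W_rep)

lemma Wrep_ints: assumes "g \<ge> 1" shows "\<forall>i. W_mat (rep g c \<sigma> e) $ i $ 2 \<in> \<int> \<and> W_mat (rep g c \<sigma> e) $ i $ 3 \<in> \<int> \<and> W_mat (rep g c \<sigma> e) $ i $ 4 \<in> \<int>"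
  using Bc_ints[of g c] by (simp add: Wrep_entry[OF assms])

lemma Ints_floor: "x \<in> \<int> \<Longrightarrow> of_int \<lfloor>x\<rfloor> = x"
  by (metis Ints_cases floor_of_int)

lemma dvdv_curv_rep: assumes "g \<ge> 1" shows "dvdv g (curv (W_mat (rep g c \<sigma> e)))"
  unfolding dvdv_def
proof
  fix i
  show "\<exists>k. curv (W_mat (rep g c \<sigma> e)) $ i = of_int g * of_int k"
    by (cases e; cases "\<sigma> i = 1 \<or> \<sigma> i = 2")
       (auto simp: Wrep_entry[OF assms] Bc_col2 intro: exI[of _ 0] exI[of _ 1] exI[of _ "-1"])
qed

lemma rep_curv_g: assumes "g \<ge> 1" "bij \<sigma>"
  shows "\<bar>W_mat (rep g c \<sigma> e) $ (inv \<sigma> 3) $ 2\<bar> = of_int g"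
proof -
  have "\<sigma> (inv \<sigma> 3) = 3" using assms(2) by (simp add: bij_is_surj surj_f_inv_f)
  then show ?thesis using assms(1) by (simp add: Wrep_entry Bc_col2)
qed

lemma dvdv_dvd: "dvdv h x \<Longrightarrow> x$i = of_int b \<Longrightarrow> h dvd b"
  unfolding dvdv_def by (metis dvd_triv_left of_int_eq_iff of_int_mult)

lemma in_orbit_props:
  assumes g: "g \<ge> 1" and s: "bij \<sigma>" and D: "D \<in> superA_orbit (rep g c \<sigma> e)"
  shows "oo_descartes D \<and> strongly_integral D \<and> divisor D = g"
proof -
  let ?R = "W_mat (rep g c \<sigma> e)" and ?W = "W_mat D"
  obtain U where U: "U \<in> G0" "U ** ?R = ?W" using orbit_eqv[OF D] unfolding eqv_def by blast
  have oo: "oo_descartes D" using orbit_eqv[OF D] by blast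
  have eU: "evI U" using G0_good[OF U(1)] unfolding good_def by blast
  have RI: "\<forall>i. ?R $ i $ 2 \<in> \<int> \<and> ?R $ i $ 3 \<in> \<int> \<and> ?R $ i $ 4 \<in> \<int>" using Wrep_ints[OF g] .
  have WI: "\<forall>i. ?W $ i $ 2 \<in> \<int> \<and> ?W $ i $ 3 \<in> \<int> \<and> ?W $ i $ 4 \<in> \<int>"
    using mm_Ints[OF eU] RI unfolding U(2)[symmetric] by blast
  have si: "strongly_integral D" unfolding SI_iff using WI .
  define b where "b = (\<lambda>i. \<lfloor>?W $ i $ 2\<rfloor>)"
  have bW: "\<And>i. ?W $ i $ 2 = of_int (b i)" unfolding b_def using WI Ints_floor by metis
  have dv: "divisor D = Gcd (range b)" unfolding divisor_W b_def ..
  have "dvdv g (curv ?W)" unfolding U(2)[symmetric] curv_mult by (rule dvdv_mv[OF eU dvdv_curv_rep[OF g]])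
  then have "\<And>i. g dvd b i" using dvdv_dvd bW by (metis curv_entry)
  then have d1: "g dvd Gcd (range b)" by (simp add: dvd_Gcd_iff)
  define G where "G = Gcd (range b)"
  have "dvdv G (curv ?W)" unfolding dvdv_def
  proof
    fix i
    have "G dvd b i" unfolding G_def by (simp add: Gcd_dvd)
    then obtain k where "b i = G * k" by blast
    then show "\<exists>k. curv ?W $ i = of_int G * of_int k" using bW by (auto intro: exI[of _ k])
  qed
  moreover obtain V where V: "V \<in> G0" "V ** U = mat 1" using G0_inv[OF U(1)] by blast
  moreover have eV: "evI V" using G0_good[OF V(1)] unfolding good_def by blast
  ultimately have "dvdv G (V *v curv ?W)" using dvdv_mv by blast
  moreover have "V *v curv ?W = curv ?R" unfolding U(2)[symmetric] curv_mult matrix_vector_mul_assoc V(2) by simp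
  ultimately have dR: "dvdv G (curv ?R)" by simp
  obtain k where "curv ?R $ (inv \<sigma> 3) = of_int G * of_int k" using dR unfolding dvdv_def by blast
  then have "\<bar>of_int G * of_int k\<bar> = (of_int g :: real)" using rep_curv_g[OF g s, of c e] by simp
  then have "\<bar>G * k\<bar> = g" by (metis of_int_abs of_int_eq_iff of_int_mult)
  then have "G dvd g" by (metis dvd_abs_iff dvd_triv_left)
  then have "G = g" using d1 g unfolding G_def by (intro zdvd_antisym_nonneg) auto
  then show ?thesis using oo si dv unfolding G_def by simp
qed


lemma bv_of_int: "p0 \<in> {0,1} \<Longrightarrow> bv (p0 = 1) = of_int p0"
  by (auto simp: bv_def)

lemma dvdv_neg: assumes hh: "dvdv h (curv X)" shows "dvdv h (curv (- X))"
  unfolding dvdv_def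
proof
  fix i
  obtain k where "curv X $ i = of_int h * of_int k" using hh unfolding dvdv_def by blast
  then have "curv (- X) $ i = of_int h * of_int (- k)" by simp
  then show "\<exists>k. curv (- X) $ i = of_int h * of_int k" by blast
qed

lemma cover:
  assumes g: "g \<ge> 1" and oo: "oo_descartes D" and si: "strongly_integral D" and dv: "divisor D = g"
  shows "\<exists>c \<sigma> e. bij \<sigma> \<and> D \<in> superA_orbit (rep g c \<sigma> e)"
proof -
  let ?W = "W_mat D"
  have r: "relW ?W" using oo_relW[OF oo] .
  have WI: "\<forall>i. ?W $ i $ 2 \<in> \<int> \<and> ?W $ i $ 3 \<in> \<int> \<and> ?W $ i $ 4 \<in> \<int>" using si unfolding SI_iff .
  define b where "b = (\<lambda>i. \<lfloor>?W $ i $ 2\<rfloor>)"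
  have bW: "\<And>i. ?W $ i $ 2 = of_int (b i)" unfolding b_def using WI Ints_floor by metis
  have gG: "g = Gcd (range b)" using dv unfolding divisor_W b_def by simp
  have gdv: "dvdv g (curv ?W)" unfolding dvdv_def
  proof
    fix i
    have "g dvd b i" unfolding gG by (simp add: Gcd_dvd)
    then obtain k where "b i = g * k" by blast
    then show "\<exists>k. curv ?W $ i = of_int g * of_int k" using bW by (auto intro: exI[of _ k])
  qed
  have gmax: "\<forall>h. dvdv h (curv ?W) \<longrightarrow> h dvd g"
  proof (intro allI impI)
    fix h assume "dvdv h (curv ?W)"
    then have "\<And>i. h dvd b i" using dvdv_dvd bW by (metis curv_entry)
    then show "h dvd g" unfolding gG by (simp add: dvd_Gcd_iff)
  qed
  have nz: "ssum (curv ?W) \<noteq> 0"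
  proof
    assume s0: "ssum (curv ?W) = 0"
    have "nullv (curv ?W)" using relW_null[OF r] .
    then have "(?W$1$2)\<^sup>2 + (?W$2$2)\<^sup>2 + (?W$3$2)\<^sup>2 + (?W$4$2)\<^sup>2 = 0" using s0 unfolding nullv_def by simp
    then have "?W$1$2 = 0 \<and> ?W$2$2 = 0 \<and> ?W$3$2 = 0 \<and> ?W$4$2 = 0"
    proof -
      assume h0: "(?W$1$2)\<^sup>2 + (?W$2$2)\<^sup>2 + (?W$3$2)\<^sup>2 + (?W$4$2)\<^sup>2 = 0"
      have "(?W$1$2)\<^sup>2 = 0 \<and> (?W$2$2)\<^sup>2 = 0 \<and> (?W$3$2)\<^sup>2 = 0 \<and> (?W$4$2)\<^sup>2 = 0"
        using h0 zero_le_power2[of "?W$1$2"] zero_le_power2[of "?W$2$2"] zero_le_power2[of "?W$3$2"]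
          zero_le_power2[of "?W$4$2"] by linarith
      then show ?thesis by simp
    qed
    then have "\<forall>i. of_int (b i) = (0::real)" using bW unfolding all4 by simp
    then have "\<forall>i. b i = 0" by simp
    then have "range b = {0}" by auto
    then show False using gG g by simp
  qed
  have bij_ok: "\<And>\<sigma> p0 q0 v. bij \<sigma> \<Longrightarrow> p0 \<in> {0,1} \<Longrightarrow> q0 \<in> {0,1} \<Longrightarrow>
      rowperm \<sigma> (if v then BV (of_int g) (of_int p0) (of_int q0) else BH (of_int g) (of_int p0) (of_int q0))
      = rowperm \<sigma> (Bc g (v, p0 = 1, q0 = 1))"
    unfolding Bc_def by (simp add: bv_of_int)
  show ?thesis
  proof (cases "ssum (curv ?W) > 0")
    case True
    obtain \<sigma> p0 q0 v where h: "bij \<sigma>" "p0 \<in> {0,1}" "q0 \<in> {0,1}"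
      "eqv ?W (rowperm \<sigma> (if v then BV (of_int g) (of_int p0) (of_int q0) else BH (of_int g) (of_int p0) (of_int q0)))"
      using cover_mat[OF r WI gdv gmax g True] by blast
    have "eqv ?W (W_mat (rep g (v, p0 = 1, q0 = 1) \<sigma> True))" using h bij_ok[OF h(1-3)] by (simp add: W_rep[OF g])
    then have "D \<in> superA_orbit (rep g (v, p0 = 1, q0 = 1) \<sigma> True)" using orbit_mem_eqv[OF oo] eqv_sym by blast
    then show ?thesis using h(1) by blast
  next
    case False
    then have neg: "ssum (curv (- ?W)) > 0" using nz by (simp add: ssum_def)
    have r': "relW (- ?W)" using relW_neg[OF r] .
    have WI': "\<forall>i. (- ?W) $ i $ 2 \<in> \<int> \<and> (- ?W) $ i $ 3 \<in> \<int> \<and> (- ?W) $ i $ 4 \<in> \<int>" using WI by simp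
    have gdv': "dvdv g (curv (- ?W))" using dvdv_neg[OF gdv] .
    have gmax': "\<forall>h. dvdv h (curv (- ?W)) \<longrightarrow> h dvd g"
    proof (intro allI impI)
      fix h assume "dvdv h (curv (- ?W))"
      then have "dvdv h (curv (- (- ?W)))" by (rule dvdv_neg)
      then have "dvdv h (curv ?W)" by simp
      then show "h dvd g" using gmax by blast
    qed
    obtain \<sigma> p0 q0 v where h: "bij \<sigma>" "p0 \<in> {0,1}" "q0 \<in> {0,1}"
      "eqv (- ?W) (rowperm \<sigma> (if v then BV (of_int g) (of_int p0) (of_int q0) else BH (of_int g) (of_int p0) (of_int q0)))"
      using cover_mat[OF r' WI' gdv' gmax' g neg] by blast
    have "eqv (- (- ?W)) (- rowperm \<sigma> (Bc g (v, p0 = 1, q0 = 1)))" using eqv_neg[OF h(4)] bij_ok[OF h(1-3)] by simp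
    then have "eqv ?W (W_mat (rep g (v, p0 = 1, q0 = 1) \<sigma> False))" by (simp add: W_rep[OF g])
    then have "D \<in> superA_orbit (rep g (v, p0 = 1, q0 = 1) \<sigma> False)" using orbit_mem_eqv[OF oo] eqv_sym by blast
    then show ?thesis using h(1) by blast
  qed
qed


subsection \<open>Distinctness of the representatives\<close>

definition pe :: "real \<Rightarrow> real \<Rightarrow> bool" where "pe x y \<longleftrightarrow> (x - y)/2 \<in> \<int>"

lemma half_not_Int: "(1/2::real) \<notin> \<int>"
proof
  assume "(1/2::real) \<in> \<int>"
  then obtain k where "(1/2::real) = of_int k" by (metis Ints_cases)
  then have "(1::real) = of_int (2*k)" by simp
  then have "1 = 2*k" by (metis of_int_eq_1_iff)
  then show False by presburger
qed

lemma pe01: assumes "pe (bv a) (bv a')" shows "a = a'"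
proof (rule ccontr)
  assume "a \<noteq> a'"
  then have "(bv a - bv a')/2 = 1/2 \<or> (bv a - bv a')/2 = -(1/2)" by (cases a; cases a') (auto simp: bv_def)
  then show False
  proof
    assume h: "(bv a - bv a')/2 = 1/2"
    have "(bv a - bv a')/2 \<in> \<int>" using assms unfolding pe_def .
    then have "(1/2::real) \<in> \<int>" by (simp only: h)
    then show False using half_not_Int by blast
  next
    assume h: "(bv a - bv a')/2 = -(1/2)"
    have "(bv a - bv a')/2 \<in> \<int>" using assms unfolding pe_def .
    then have "- ((bv a - bv a')/2) \<in> \<int>" by (rule Ints_minus)
    then have "(1/2::real) \<in> \<int>" by (simp only: h minus_minus)
    then show False using half_not_Int by blast
  qed
qed

lemma pe_neg1: "y \<in> \<int> \<Longrightarrow> pe (- x) y \<longleftrightarrow> pe x y"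
proof -
  assume y: "y \<in> \<int>"
  have e1: "(- x - y)/2 = - ((x - y)/2) - y" by (simp add: field_simps)
  have e2: "(x - y)/2 = - ((- x - y)/2) - y" by (simp add: field_simps)
  show ?thesis unfolding pe_def
  proof
    assume "(- x - y)/2 \<in> \<int>" then show "(x - y)/2 \<in> \<int>" unfolding e2 using y by (intro Ints_diff Ints_minus)
  next
    assume "(x - y)/2 \<in> \<int>" then show "(- x - y)/2 \<in> \<int>" unfolding e1 using y by (intro Ints_diff Ints_minus)
  qed
qed

lemma pe_sym: "pe x y \<longleftrightarrow> pe y x"
proof -
  have e1: "(y - x)/2 = - ((x - y)/2)" and e2: "(x - y)/2 = - ((y - x)/2)" by (simp_all add: field_simps)
  show ?thesis unfolding pe_def
  proof
    assume "(x - y)/2 \<in> \<int>" then show "(y - x)/2 \<in> \<int>" unfolding e1 by (rule Ints_minus)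
  next
    assume "(y - x)/2 \<in> \<int>" then show "(x - y)/2 \<in> \<int>" unfolding e2 by (rule Ints_minus)
  qed
qed

lemma pe_signs:
  assumes "x \<in> \<int>" "y \<in> \<int>"
  shows "pe ((if e then 1 else -1) * x) ((if e' then 1 else -1) * y) \<longleftrightarrow> pe x y"
proof -
  have a: "pe x (- y) \<longleftrightarrow> pe x y"
  proof -
    have "pe x (- y) \<longleftrightarrow> pe (- y) x" by (rule pe_sym)
    also have "\<dots> \<longleftrightarrow> pe y x" by (rule pe_neg1[OF assms(1)])
    also have "\<dots> \<longleftrightarrow> pe x y" by (rule pe_sym)
    finally show ?thesis .
  qed
  have b: "pe (- x) y \<longleftrightarrow> pe x y" by (rule pe_neg1[OF assms(2)])
  have c: "pe (- x) (- y) \<longleftrightarrow> pe x (- y)" using pe_neg1[of "- y" x] assms(2) by simp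
  show ?thesis using a b c by (cases e; cases e') simp_all
qed

lemma pe_m2: "pe (x - 2*t) (y - 2*t') \<longleftrightarrow> pe x y" if "t \<in> \<int>" "t' \<in> \<int>"
proof -
  have e1: "(x - 2*t - (y - 2*t'))/2 = (x - y)/2 - (t - t')" by (simp add: field_simps)
  have e2: "(x - y)/2 = (x - 2*t - (y - 2*t'))/2 + (t - t')" by (simp add: field_simps)
  show ?thesis unfolding pe_def
  proof
    assume "(x - 2*t - (y - 2*t'))/2 \<in> \<int>" then show "(x - y)/2 \<in> \<int>" unfolding e2 using that by (intro Ints_add Ints_diff)
  next
    assume "(x - y)/2 \<in> \<int>" then show "(x - 2*t - (y - 2*t'))/2 \<in> \<int>" unfolding e1 using that by (intro Ints_diff)
  qed
qed

lemma mv_minus: "((U::real^4^4) *v x)$i - x$i = (U$i$1 - d4 i 1)*x$1 + (U$i$2 - d4 i 2)*x$2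
     + (U$i$3 - d4 i 3)*x$3 + (U$i$4 - d4 i 4)*x$4"
proof -
  have "i = 1 \<or> i = 2 \<or> i = 3 \<or> i = 4" by (rule exhaust_4)
  then show ?thesis by (auto simp: mv_entry d4_def algebra_simps)
qed

lemma pe_inv: assumes "evI U" "\<forall>k. x$k \<in> \<int>" shows "pe ((U *v x)$i) (x$i)"
proof -
  have I: "\<And>i j. (U$i$j - d4 i j)/2 \<in> \<int>" using assms(1) unfolding evI_def by blast
  have "((U *v x)$i - x$i)/2 = ((U$i$1 - d4 i 1)/2)*x$1 + ((U$i$2 - d4 i 2)/2)*x$2
     + ((U$i$3 - d4 i 3)/2)*x$3 + ((U$i$4 - d4 i 4)/2)*x$4" unfolding mv_minus by (simp add: field_simps)
  also have "\<dots> \<in> \<int>" using I assms(2) by (intro Ints_add Ints_mult) auto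
  finally show ?thesis unfolding pe_def .
qed

lemma mv_col: "U *v (\<chi> k. X$k$j * t) = (\<chi> k. ((U::real^4^4) ** X)$k$j * t)"
  by (simp add: vec_eq_iff matrix_vector_mult_def matrix_matrix_mult_def sum_distrib_right mult.assoc)

lemma pe_col: assumes "U \<in> G0" "U ** X = Y" "\<forall>k. X$k$j * t \<in> \<int>" shows "pe (Y$i$j * t) (X$i$j * t)"
proof -
  have e: "evI U" using G0_good[OF assms(1)] unfolding good_def by blast
  have "pe ((U *v (\<chi> k. X$k$j * t))$i) ((\<chi> k. X$k$j * t)$i)" by (rule pe_inv[OF e]) (use assms(3) in simp)
  then show ?thesis unfolding mv_col assms(2) by simp
qed

lemma Bc_vals:
  fixes g :: int assumes g: "g \<ge> 1"
  shows "Bc g (v,a,b) $ m $ 2 / of_int g = bv (\<not> (m = 1 \<or> m = 2))"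
    and "m = 1 \<or> m = 2 \<Longrightarrow> Bc g (v,a,b) $ m $ 3 = (if m = 1 then 1 else -1) * bv v"
    and "m = 3 \<or> m = 4 \<Longrightarrow> Bc g (v,a,b) $ m $ 3 = bv a - 2 * bv (\<not> v \<and> m = 4)"
    and "m = 3 \<or> m = 4 \<Longrightarrow> Bc g (v,a,b) $ m $ 4 = bv b - 2 * bv (v \<and> m = 4)"
proof -
  have m: "m = 1 \<or> m = 2 \<or> m = 3 \<or> m = 4" by (rule exhaust_4)
  show "Bc g (v,a,b) $ m $ 2 / of_int g = bv (\<not> (m = 1 \<or> m = 2))" using m g
    unfolding Bc_def by (cases v) (auto simp: BH_def BV_def bv_def)
  show "m = 1 \<or> m = 2 \<Longrightarrow> Bc g (v,a,b) $ m $ 3 = (if m = 1 then 1 else -1) * bv v"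
    unfolding Bc_def by (cases v) (auto simp: BH_def BV_def bv_def)
  show "m = 3 \<or> m = 4 \<Longrightarrow> Bc g (v,a,b) $ m $ 3 = bv a - 2 * bv (\<not> v \<and> m = 4)"
    unfolding Bc_def by (cases v) (auto simp: BH_def BV_def bv_def)
  show "m = 3 \<or> m = 4 \<Longrightarrow> Bc g (v,a,b) $ m $ 4 = bv b - 2 * bv (v \<and> m = 4)"
    unfolding Bc_def by (cases v) (auto simp: BH_def BV_def bv_def)
qed


lemma relW_rinv: assumes "relW W" shows "W ** (Am ** transpose W ** Qp4) = mat 1"
proof -
  have "W ** (Am ** transpose W ** Qp4) = (W ** Am ** transpose W) ** Qp4" by (simp add: matrix_mul_assoc)
  also have "\<dots> = mat 1" using assms Qp_Qp4 unfolding relW_def by simp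
  finally show ?thesis .
qed

lemma rowperm_rmult: "rowperm \<sigma> X ** Y = rowperm \<sigma> ((X::real^4^4) ** Y)"
  by (simp add: vec_eq_iff matrix_matrix_mult_def)

lemma neg_lmult: "(- X) ** Y = - ((X::real^4^4) ** Y)"
  by (simp add: vec_eq_iff matrix_matrix_mult_def sum_negf)

lemma perm_entry: assumes "bij \<sigma>" shows "(U ** rowperm \<sigma> (mat 1))$i$j = (U::real^4^4)$i$(inv \<sigma> j)"
proof -
  have e: "\<And>k. (\<sigma> k = j) = (k = inv \<sigma> j)" using assms by (metis bij_inv_eq_iff)
  have "(U ** rowperm \<sigma> (mat 1))$i$j = (\<Sum>k\<in>UNIV. U$i$k * (if k = inv \<sigma> j then 1 else 0))"
    by (simp add: matrix_matrix_mult_def mat_def e)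
  also have "\<dots> = U$i$(inv \<sigma> j)" by (simp add: if_distrib[of "\<lambda>x. _ * x"] cong: if_cong)
  finally show ?thesis .
qed

definition sg :: "bool \<Rightarrow> real" where "sg e = (if e then 1 else -1)"

lemma sg_Ints [simp]: "sg e \<in> \<int>" by (simp add: sg_def)

lemma Wrep_sg: "g \<ge> 1 \<Longrightarrow> W_mat (rep g c \<sigma> e) $ i $ j = sg e * Bc g c $ (\<sigma> i) $ j"
  unfolding sg_def by (rule Wrep_entry)

lemma sg_mult: "sg p * (sg q * y) = sg (p = q) * y"
  unfolding sg_def by auto

lemma pe_sg: assumes "x \<in> \<int>" "y \<in> \<int>" shows "pe (sg e * x) (sg e' * y) \<longleftrightarrow> pe x y"
  using pe_signs[OF assms, of e e'] unfolding sg_def .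

lemma rep_distinct_c:
  assumes g: "g \<ge> 1" and s: "bij \<sigma>" "bij \<sigma>'" and U: "U \<in> G0"
    and eq: "U ** W_mat (rep g c \<sigma> e) = W_mat (rep g c' \<sigma>' e')"
  shows "c = c'"
proof -
  obtain v a b where c: "c = (v,a,b)" by (cases c) auto
  obtain v' a' b' where c': "c' = (v',a',b')" by (cases c') auto
  let ?Wl = "W_mat (rep g c \<sigma> e)" and ?Wk = "W_mat (rep g c' \<sigma>' e')"
  have g0: "(of_int g :: real) \<noteq> 0" using g by simp
  have col2: "\<And>i. ?Wl $ i $ 2 * (1 / of_int g) = sg e * bv (\<not> (\<sigma> i = 1 \<or> \<sigma> i = 2))"
    using Bc_vals(1)[OF g] unfolding Wrep_sg[OF g] c by (simp add: field_simps)
  have col2': "\<And>i. ?Wk $ i $ 2 * (1 / of_int g) = sg e' * bv (\<not> (\<sigma>' i = 1 \<or> \<sigma>' i = 2))"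
    using Bc_vals(1)[OF g] unfolding Wrep_sg[OF g] c' by (simp add: field_simps)
  have P2: "\<And>i. pe (bv (\<not> (\<sigma>' i = 1 \<or> \<sigma>' i = 2))) (bv (\<not> (\<sigma> i = 1 \<or> \<sigma> i = 2)))"
  proof -
    fix i
    have "pe (?Wk $ i $ 2 * (1 / of_int g)) (?Wl $ i $ 2 * (1 / of_int g))"
      by (rule pe_col[OF U eq]) (simp only: col2, simp add: bv_def sg_def)
    then show "pe (bv (\<not> (\<sigma>' i = 1 \<or> \<sigma>' i = 2))) (bv (\<not> (\<sigma> i = 1 \<or> \<sigma> i = 2)))"
      unfolding col2 col2' using pe_sg by simp
  qed
  have P3: "\<And>i. pe (sg e' * Bc g c' $ (\<sigma>' i) $ 3) (sg e * Bc g c $ (\<sigma> i) $ 3)"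
  proof -
    fix i
    have "pe (?Wk $ i $ 3 * 1) (?Wl $ i $ 3 * 1)"
      by (rule pe_col[OF U eq]) (use Bc_ints[of g c] in \<open>simp add: Wrep_sg[OF g]\<close>)
    then show "pe (sg e' * Bc g c' $ (\<sigma>' i) $ 3) (sg e * Bc g c $ (\<sigma> i) $ 3)" by (simp add: Wrep_sg[OF g])
  qed
  have P4: "\<And>i. pe (sg e' * Bc g c' $ (\<sigma>' i) $ 4) (sg e * Bc g c $ (\<sigma> i) $ 4)"
  proof -
    fix i
    have "pe (?Wk $ i $ 4 * 1) (?Wl $ i $ 4 * 1)"
      by (rule pe_col[OF U eq]) (use Bc_ints[of g c] in \<open>simp add: Wrep_sg[OF g]\<close>)
    then show "pe (sg e' * Bc g c' $ (\<sigma>' i) $ 4) (sg e * Bc g c $ (\<sigma> i) $ 4)" by (simp add: Wrep_sg[OF g])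
  qed
  define i0 where "i0 = inv \<sigma> 3"
  have si0: "\<sigma> i0 = 3" unfolding i0_def using s(1) by (simp add: bij_is_surj surj_f_inv_f)
  have m0: "\<sigma>' i0 = 3 \<or> \<sigma>' i0 = 4"
  proof -
    have "\<not> (\<sigma>' i0 = 1 \<or> \<sigma>' i0 = 2)" using pe01[OF P2[of i0]] si0 by simp
    moreover have "\<sigma>' i0 = 1 \<or> \<sigma>' i0 = 2 \<or> \<sigma>' i0 = 3 \<or> \<sigma>' i0 = 4" by (rule exhaust_4)
    ultimately show ?thesis by blast
  qed
  have "pe (sg e' * (bv a' - 2 * bv (\<not> v' \<and> \<sigma>' i0 = 4))) (sg e * (bv a - 2 * bv (\<not> v \<and> \<sigma> i0 = 4)))"
    using P3[of i0] Bc_vals(3)[OF g, of "\<sigma>' i0" v' a' b'] Bc_vals(3)[OF g, of "\<sigma> i0" v a b] m0 si0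
    unfolding c c' by simp
  then have "pe (bv a' - 2 * bv (\<not> v' \<and> \<sigma>' i0 = 4)) (bv a - 2 * bv (\<not> v \<and> \<sigma> i0 = 4))"
    using pe_sg by simp
  then have "pe (bv a') (bv a)" using pe_m2 by simp
  then have aa: "a' = a" by (rule pe01)
  have "pe (sg e' * (bv b' - 2 * bv (v' \<and> \<sigma>' i0 = 4))) (sg e * (bv b - 2 * bv (v \<and> \<sigma> i0 = 4)))"
    using P4[of i0] Bc_vals(4)[OF g, of "\<sigma>' i0" v' a' b'] Bc_vals(4)[OF g, of "\<sigma> i0" v a b] m0 si0
    unfolding c c' by simp
  then have "pe (bv b' - 2 * bv (v' \<and> \<sigma>' i0 = 4)) (bv b - 2 * bv (v \<and> \<sigma> i0 = 4))"
    using pe_sg by simp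
  then have "pe (bv b') (bv b)" using pe_m2 by simp
  then have bb: "b' = b" by (rule pe01)
  define i1 where "i1 = inv \<sigma> 1"
  have si1: "\<sigma> i1 = 1" unfolding i1_def using s(1) by (simp add: bij_is_surj surj_f_inv_f)
  have m1: "\<sigma>' i1 = 1 \<or> \<sigma>' i1 = 2" using pe01[OF P2[of i1]] si1 by simp
  have "pe (sg e' * ((if \<sigma>' i1 = 1 then 1 else -1) * bv v')) (sg e * ((if \<sigma> i1 = 1 then 1 else -1) * bv v))"
    using P3[of i1] Bc_vals(2)[OF g, of "\<sigma>' i1" v' a' b'] Bc_vals(2)[OF g, of "\<sigma> i1" v a b] m1 si1
    unfolding c c' by simp
  then have "pe (sg e' * (sg (\<sigma>' i1 = 1) * bv v')) (sg e * (sg (\<sigma> i1 = 1) * bv v))"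
    unfolding sg_def by simp
  then have "pe (bv v') (bv v)" unfolding sg_mult using pe_sg by simp
  then have vv: "v' = v" by (rule pe01)
  show ?thesis using c c' aa bb vv by simp
qed


lemma relW_Bc: "g \<ge> 1 \<Longrightarrow> relW (Bc g c)"
  using pos_relW[OF pos_baseC] W_baseC by metis

lemma half_not_Int2: "(-1/2::real) \<notin> \<int>"
proof
  assume "(-1/2::real) \<in> \<int>" then have "- (-1/2::real) \<in> \<int>" by (rule Ints_minus)
  then show False using half_not_Int by simp
qed

lemma rep_distinct_se:
  assumes g: "g \<ge> 1" and s: "bij \<sigma>" "bij \<sigma>'" and U: "U \<in> G0"
    and eq: "U ** W_mat (rep g c \<sigma> e) = W_mat (rep g c \<sigma>' e')"
  shows "\<sigma> = \<sigma>' \<and> e = e'"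
proof -
  let ?B = "Bc g c"
  define Bi where "Bi = Am ** transpose ?B ** Qp4"
  have Bi: "?B ** Bi = mat 1" unfolding Bi_def using relW_rinv[OF relW_Bc[OF g]] .
  define E where "E = rowperm \<sigma> (mat 1)"
  define E' where "E' = rowperm \<sigma>' (mat 1)"
  have rB: "\<And>\<tau>. rowperm \<tau> ?B ** Bi = rowperm \<tau> (mat 1)" using Bi by (simp add: rowperm_rmult)
  have key: "U ** E = (if e = e' then E' else - E')"
  proof -
    have "U ** (if e then rowperm \<sigma> ?B else - rowperm \<sigma> ?B) = (if e' then rowperm \<sigma>' ?B else - rowperm \<sigma>' ?B)"
      using eq by (simp add: W_rep[OF g])
    then have "(U ** (if e then rowperm \<sigma> ?B else - rowperm \<sigma> ?B)) ** Bi = (if e' then rowperm \<sigma>' ?B else - rowperm \<sigma>' ?B) ** Bi"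
      by simp
    then have "U ** (if e then E else - E) = (if e' then E' else - E')"
      unfolding E_def E'_def by (cases e; cases e') (simp_all add: matrix_mul_assoc[symmetric] neg_lmult mult_neg rB)
    then show ?thesis by (cases e; cases e') (auto simp: mult_neg minus_equation_iff)
  qed
  define t where "t = (if e = e' then 1 else -1::real)"
  have t: "t = 1 \<or> t = -1" unfolding t_def by simp
  have ent: "\<And>i m. U$i$m = t * (if \<sigma>' i = \<sigma> m then 1 else 0)"
  proof -
    fix i m
    have "U$i$m = (U ** E)$i$(\<sigma> m)" unfolding E_def perm_entry[OF s(1)] using s(1) by (simp add: bij_is_inj)
    also have "\<dots> = t * (if \<sigma>' i = \<sigma> m then 1 else 0)" unfolding key t_def E'_def by (simp add: mat_def)
    finally show "U$i$m = t * (if \<sigma>' i = \<sigma> m then 1 else 0)" .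
  qed
  have eU: "evI U" using G0_good[OF U] unfolding good_def by blast
  have nd: "\<And>i m. \<sigma>' i = \<sigma> m \<Longrightarrow> i = m"
  proof (rule ccontr)
    fix i m assume h: "\<sigma>' i = \<sigma> m" "i \<noteq> m"
    have "(U$i$m - d4 i m)/2 \<in> \<int>" using eU unfolding evI_def by blast
    then have "t/2 \<in> \<int>" using ent[of i m] h by (simp add: d4_def)
    then show False using t half_not_Int half_not_Int2 by auto
  qed
  have ss: "\<sigma>' = \<sigma>"
  proof
    fix i
    have "\<sigma> (inv \<sigma> (\<sigma>' i)) = \<sigma>' i" using s(1) by (simp add: bij_is_surj surj_f_inv_f)
    then have "i = inv \<sigma> (\<sigma>' i)" using nd by metis
    then show "\<sigma>' i = \<sigma> i" using s(1) by (metis bij_inv_eq_iff)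
  qed
  have ee: "e = e'"
  proof (rule ccontr)
    assume ne: "e \<noteq> e'"
    then have Ud: "\<And>i m. U$i$m = - (if i = m then 1 else 0)" using ent ss s(1) unfolding t_def by (simp add: bij_is_inj inj_eq)
    define x :: "real^4" where "x = vector [0, 0, 1, 1]"
    have "nullv x \<and> ssum x > 0" unfolding x_def nullv_def ssum_def by simp
    then have "ssum (U *v x) > 0" using G0_good[OF U] unfolding good_def orth_def by blast
    moreover have "ssum (U *v x) = -2" unfolding x_def ssum_def mv_entry Ud by simp
    ultimately show False by simp
  qed
  show ?thesis using ss ee by simp
qed


subsection \<open>Boundaries determine circles up to orientation\<close>

lemma sphere_inj:
  fixes c c' :: complex
  assumes r: "r > 0" "r' > 0" and eq: "sphere c r = sphere c' r'"
  shows "c = c' \<and> r = r'"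
proof -
  have mem: "\<And>z. dist c z = r \<Longrightarrow> dist c' z = r'" using eq by (metis mem_sphere)
  define w where "w = c - c'"
  have d1: "dist c' (c + of_real r) = r'" "dist c' (c - of_real r) = r'"
    "dist c' (c + \<i> * of_real r) = r'" "dist c' (c - \<i> * of_real r) = r'"
    by (rule mem, use r in \<open>simp add: dist_norm norm_mult\<close>)+
  have s1: "(Re w + r)\<^sup>2 + (Im w)\<^sup>2 = r'\<^sup>2" using d1(1) dist_sq[of c' "c + of_real r"] unfolding w_def
    by (simp add: power2_eq_square algebra_simps)
  have s2: "(Re w - r)\<^sup>2 + (Im w)\<^sup>2 = r'\<^sup>2" using d1(2) dist_sq[of c' "c - of_real r"] unfolding w_def
    by (simp add: power2_eq_square algebra_simps)
  have s3: "(Re w)\<^sup>2 + (Im w + r)\<^sup>2 = r'\<^sup>2" using d1(3) dist_sq[of c' "c + \<i> * of_real r"] unfolding w_def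
    by (simp add: power2_eq_square algebra_simps)
  have s4: "(Re w)\<^sup>2 + (Im w - r)\<^sup>2 = r'\<^sup>2" using d1(4) dist_sq[of c' "c - \<i> * of_real r"] unfolding w_def
    by (simp add: power2_eq_square algebra_simps)
  have "(Re w + r)\<^sup>2 - (Re w - r)\<^sup>2 = 4 * r * Re w" by (simp add: power2_eq_square algebra_simps)
  then have "4 * r * Re w = 0" using s1 s2 by linarith
  then have rw: "Re w = 0" using r by simp
  have "(Im w + r)\<^sup>2 - (Im w - r)\<^sup>2 = 4 * r * Im w" by (simp add: power2_eq_square algebra_simps)
  then have "4 * r * Im w = 0" using s3 s4 by linarith
  then have iw: "Im w = 0" using r by simp
  have cc: "c = c'" using rw iw unfolding w_def by (simp add: complex_eq_iff)
  have "r\<^sup>2 = r'\<^sup>2" using s1 rw iw by simp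
  then have "r = r'" using r by (simp add: power2_eq_iff_nonneg)
  with cc show ?thesis by simp
qed

lemma line_inj:
  assumes n: "cmod n = 1" "cmod n' = 1" and eq: "{z. Re (z * cnj n) = d} = {z. Re (z * cnj n') = d'}"
  shows "(n' = n \<and> d' = d) \<or> (n' = - n \<and> d' = - d)"
proof -
  have mem: "\<And>z. Re (z * cnj n) = d \<Longrightarrow> Re (z * cnj n') = d'" using eq by blast
  define a where "a = Re n"
  define b where "b = Im n"
  define a' where "a' = Re n'"
  define b' where "b' = Im n'"
  have u: "a\<^sup>2 + b\<^sup>2 = 1" "a'\<^sup>2 + b'\<^sup>2 = 1" using n cmod_power2[of n] cmod_power2[of n'] unfolding a_def b_def a'_def b'_def by simp_all
  have u': "a*a + b*b = 1" using u by (simp add: power2_eq_square)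
  have z1: "Re ((of_real d * n) * cnj n) = d"
  proof -
    have "Re ((of_real d * n) * cnj n) = d * (Re n * Re n + Im n * Im n)" by (simp add: algebra_simps)
    also have "\<dots> = d" using u' unfolding a_def b_def by (simp only: mult_1_right)
    finally show ?thesis .
  qed
  have e1: "d * (a*a' + b*b') = d'" using mem[OF z1] unfolding a_def b_def a'_def b'_def by (simp add: algebra_simps)
  have z2: "Re ((of_real d * n + \<i> * n) * cnj n) = d"
  proof -
    have "Re ((of_real d * n + \<i> * n) * cnj n) = d * (Re n * Re n + Im n * Im n)" by (simp add: algebra_simps)
    also have "\<dots> = d" using u' unfolding a_def b_def by (simp only: mult_1_right)
    finally show ?thesis .
  qed
  have e2: "d * (a*a' + b*b') + (a*b' - b*a') = d'" using mem[OF z2] unfolding a_def b_def a'_def b'_def by (simp add: algebra_simps)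
  have det: "a*b' - b*a' = 0" using e1 e2 by simp
  have "(a*a' + b*b')\<^sup>2 + (a*b' - b*a')\<^sup>2 = (a\<^sup>2 + b\<^sup>2) * (a'\<^sup>2 + b'\<^sup>2)"
    by (simp add: power2_eq_square algebra_simps)
  then have "(a*a' + b*b')\<^sup>2 = 1\<^sup>2" using u det by simp
  then have pm: "a*a' + b*b' = 1 \<or> a*a' + b*b' = -1" using power2_eq_iff by blast
  have sq0: "(a - t*a')\<^sup>2 + (b - t*b')\<^sup>2 = (a\<^sup>2 + b\<^sup>2) + t*t*(a'\<^sup>2 + b'\<^sup>2) - 2*t*(a*a' + b*b')" for t
    by (simp add: power2_eq_square algebra_simps)
  have sq: "(a - t*a')\<^sup>2 + (b - t*b')\<^sup>2 = 1 + t*t - 2*t*(a*a' + b*b')" for t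
    using sq0[of t] u by simp
  from pm show ?thesis
  proof
    assume p: "a*a' + b*b' = 1"
    have "(a - 1*a')\<^sup>2 + (b - 1*b')\<^sup>2 = 0" using sq[of 1] p by simp
    then have "a = a' \<and> b = b'" by (simp add: sum_power2_eq_zero_iff)
    then have "n' = n" unfolding a_def b_def a'_def b'_def by (simp add: complex_eq_iff)
    moreover have "d' = d" using e1 p by simp
    ultimately show ?thesis by simp
  next
    assume p: "a*a' + b*b' = -1"
    have "(a - (-1)*a')\<^sup>2 + (b - (-1)*b')\<^sup>2 = 0" using sq[of "-1"] p by simp
    then have "a = - a' \<and> b = - b'" by (simp add: sum_power2_eq_zero_iff)
    then have "n' = - n" unfolding a_def b_def a'_def b'_def by (simp add: complex_eq_iff)
    moreover have "d' = - d" using e1 p by simp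
    ultimately show ?thesis by simp
  qed
qed

lemma bd_aug:
  assumes wA: "wf_oc A" and wB: "wf_oc B" and eq: "oc_boundary A = oc_boundary B"
  shows "aug_row B = aug_row A \<or> aug_row B = - aug_row A"
proof (cases A)
  case (OCirc c r b)
  show ?thesis
  proof (cases B)
    case (OCirc c' r' b')
    have "Some ` sphere c r = Some ` sphere c' r'" using eq \<open>A = _\<close> \<open>B = _\<close> by simp
    then have "sphere c r = sphere c' r'" by (simp add: inj_image_eq_iff)
    then have "c = c' \<and> r = r'" using sphere_inj wA wB \<open>A = _\<close> \<open>B = _\<close> by simp
    then have "B = A \<or> B = oc_reverse A" using \<open>A = _\<close> \<open>B = _\<close> by (cases b; cases b') auto
    then show ?thesis using aug_row_reverse by auto
  next
    case (OLine n d)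
    have "None \<in> oc_boundary B" using OLine by simp
    then show ?thesis using eq \<open>A = _\<close> by auto
  qed
next
  case (OLine n d)
  show ?thesis
  proof (cases B)
    case (OCirc c' r' b')
    have "None \<in> oc_boundary A" using OLine by simp
    then show ?thesis using eq \<open>B = _\<close> by auto
  next
    case (OLine n' d')
    have "Some ` {z. Re (z * cnj n) = d} = Some ` {z. Re (z * cnj n') = d'}"
    proof -
      have "insert None (Some ` {z. Re (z * cnj n) = d}) = insert None (Some ` {z. Re (z * cnj n') = d'})"
        using eq \<open>A = _\<close> \<open>B = _\<close> by simp
      then show ?thesis by (auto simp: set_eq_iff)
    qed
    then have "{z. Re (z * cnj n) = d} = {z. Re (z * cnj n') = d'}" by (simp add: inj_image_eq_iff)
    then have "(n' = n \<and> d' = d) \<or> (n' = - n \<and> d' = - d)" using line_inj wA wB \<open>A = _\<close> \<open>B = OLine n' d'\<close> by simp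
    then have "B = A \<or> B = oc_reverse A" using \<open>A = _\<close> \<open>B = _\<close> by auto
    then show ?thesis using aug_row_reverse by auto
  qed
qed


lemma compat:
  assumes g: "g \<ge> 1"
    and p2: "pe (sg s * (Bc g c $ m $ 2 / of_int g)) (sg s' * (Bc g c' $ m' $ 2 / of_int g))"
    and p3: "pe (sg s * Bc g c $ m $ 3) (sg s' * Bc g c' $ m' $ 3)"
    and p4: "pe (sg s * Bc g c $ m $ 4) (sg s' * Bc g c' $ m' $ 4)"
  shows "((m = 3 \<or> m = 4) \<longrightarrow> (m' = 3 \<or> m' = 4) \<and> fst (snd c) = fst (snd c') \<and> snd (snd c) = snd (snd c'))
       \<and> ((m = 1 \<or> m = 2) \<longrightarrow> (m' = 1 \<or> m' = 2) \<and> fst c = fst c')"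
proof -
  obtain v a b where c: "c = (v,a,b)" by (cases c) auto
  obtain v' a' b' where c': "c' = (v',a',b')" by (cases c') auto
  have P2: "pe (bv (\<not> (m = 1 \<or> m = 2))) (bv (\<not> (m' = 1 \<or> m' = 2)))"
    using p2 unfolding c c' Bc_vals(1)[OF g] using pe_sg by simp
  have mm: "m = 1 \<or> m = 2 \<or> m = 3 \<or> m = 4" "m' = 1 \<or> m' = 2 \<or> m' = 3 \<or> m' = 4" by (rule exhaust_4)+
  have A: "(m = 3 \<or> m = 4) \<longrightarrow> (m' = 3 \<or> m' = 4) \<and> a = a' \<and> b = b'"
  proof
    assume m: "m = 3 \<or> m = 4"
    have m': "m' = 3 \<or> m' = 4" using pe01[OF P2] m mm by auto
    have "pe (sg s * (bv a - 2 * bv (\<not> v \<and> m = 4))) (sg s' * (bv a' - 2 * bv (\<not> v' \<and> m' = 4)))"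
      using p3 Bc_vals(3)[OF g, of m v a b] Bc_vals(3)[OF g, of m' v' a' b'] m m' unfolding c c' by simp
    then have "pe (bv a - 2 * bv (\<not> v \<and> m = 4)) (bv a' - 2 * bv (\<not> v' \<and> m' = 4))" using pe_sg by simp
    then have "pe (bv a) (bv a')" using pe_m2 by simp
    then have aa: "a = a'" by (rule pe01)
    have "pe (sg s * (bv b - 2 * bv (v \<and> m = 4))) (sg s' * (bv b' - 2 * bv (v' \<and> m' = 4)))"
      using p4 Bc_vals(4)[OF g, of m v a b] Bc_vals(4)[OF g, of m' v' a' b'] m m' unfolding c c' by simp
    then have "pe (bv b - 2 * bv (v \<and> m = 4)) (bv b' - 2 * bv (v' \<and> m' = 4))" using pe_sg by simp
    then have "pe (bv b) (bv b')" using pe_m2 by simp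
    then have bb: "b = b'" by (rule pe01)
    show "(m' = 3 \<or> m' = 4) \<and> a = a' \<and> b = b'" using m' aa bb by simp
  qed
  have B: "(m = 1 \<or> m = 2) \<longrightarrow> (m' = 1 \<or> m' = 2) \<and> v = v'"
  proof
    assume m: "m = 1 \<or> m = 2"
    have m': "m' = 1 \<or> m' = 2" using pe01[OF P2] m mm by auto
    have "pe (sg s * ((if m = 1 then 1 else -1) * bv v)) (sg s' * ((if m' = 1 then 1 else -1) * bv v'))"
      using p3 Bc_vals(2)[OF g, of m v a b] Bc_vals(2)[OF g, of m' v' a' b'] m m' unfolding c c' by simp
    then have "pe (sg s * (sg (m = 1) * bv v)) (sg s' * (sg (m' = 1) * bv v'))" unfolding sg_def by simp
    then have "pe (bv v) (bv v')" unfolding sg_mult using pe_sg by simp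
    then have "v = v'" by (rule pe01)
    then show "(m' = 1 \<or> m' = 2) \<and> v = v'" using m' by simp
  qed
  show ?thesis using A B c c' by simp
qed

lemma wf_oo: "oo_descartes D \<Longrightarrow> wf_oc (D i)"
  unfolding oo_descartes_def pos_descartes_def by (metis comp_apply wf_reverse)

lemma sp_distinct:
  assumes g: "g \<ge> 1" and ne: "c \<noteq> c'"
  shows "super_packing (baseC g c) \<noteq> super_packing (baseC g c')"
proof -
  define w :: 4 where "w = (if fst (snd c) = fst (snd c') \<and> snd (snd c) = snd (snd c') then 1 else 3)"
  have ooc: "oo_descartes (baseC g c)" using pos_baseC[OF g] unfolding oo_descartes_def by blast
  have mem: "oc_boundary (baseC g c w) \<in> super_packing (baseC g c)"
    unfolding super_packing_def using self_orbit[OF ooc] by blast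
  have "oc_boundary (baseC g c w) \<notin> super_packing (baseC g c')"
  proof
    assume "oc_boundary (baseC g c w) \<in> super_packing (baseC g c')"
    then obtain D' i where D': "D' \<in> superA_orbit (baseC g c')" "oc_boundary (baseC g c w) = oc_boundary (D' i)"
      unfolding super_packing_def by blast
    obtain U where U: "U \<in> G0" "U ** W_mat (baseC g c') = W_mat D'" using orbit_eqv[OF D'(1)] unfolding eqv_def by blast
    have U': "U ** Bc g c' = W_mat D'" using U(2) W_baseC[OF g] by simp
    have wfD: "wf_oc (D' i)" using wf_oo orbit_eqv[OF D'(1)] by blast
    have wfC: "wf_oc (baseC g c w)" using pos_baseC[OF g] unfolding pos_descartes_def by blast
    obtain s where s: "aug_row (D' i) = (if s then aug_row (baseC g c w) else - aug_row (baseC g c w))"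
      using bd_aug[OF wfC wfD D'(2)] by (metis (full_types))
    have row: "\<And>j. W_mat D' $ i $ j = sg s * Bc g c $ w $ j"
      using s W_baseC[OF g, of c] unfolding sg_def by (cases s) (auto simp: W_row[symmetric])
    have g0: "(of_int g :: real) \<noteq> 0" using g by simp
    have I2: "\<forall>k. Bc g c' $ k $ 2 * (1 / of_int g) \<in> \<int>"
      using Bc_vals(1)[OF g] by (metis (no_types, lifting) bv_Ints prod_cases3 times_divide_eq_right mult_1_right)
    have q2: "pe (W_mat D' $ i $ 2 * (1 / of_int g)) (Bc g c' $ i $ 2 * (1 / of_int g))"
      by (rule pe_col[OF U(1) U' I2])
    have q3: "pe (W_mat D' $ i $ 3 * 1) (Bc g c' $ i $ 3 * 1)"
      by (rule pe_col[OF U(1) U']) (use Bc_ints[of g c'] in simp)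
    have q4: "pe (W_mat D' $ i $ 4 * 1) (Bc g c' $ i $ 4 * 1)"
      by (rule pe_col[OF U(1) U']) (use Bc_ints[of g c'] in simp)
    have p2: "pe (sg s * (Bc g c $ w $ 2 / of_int g)) (sg True * (Bc g c' $ i $ 2 / of_int g))"
      using q2 unfolding row by (simp add: sg_def)
    have p3: "pe (sg s * Bc g c $ w $ 3) (sg True * Bc g c' $ i $ 3)" using q3 unfolding row by (simp add: sg_def)
    have p4: "pe (sg s * Bc g c $ w $ 4) (sg True * Bc g c' $ i $ 4)" using q4 unfolding row by (simp add: sg_def)
    have cp: "((w = 3 \<or> w = 4) \<longrightarrow> (i = 3 \<or> i = 4) \<and> fst (snd c) = fst (snd c') \<and> snd (snd c) = snd (snd c'))
       \<and> ((w = 1 \<or> w = 2) \<longrightarrow> (i = 1 \<or> i = 2) \<and> fst c = fst c')"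
      by (rule compat[OF g p2 p3 p4])
    show False
    proof (cases "fst (snd c) = fst (snd c') \<and> snd (snd c) = snd (snd c')")
      case True
      then have "w = 1" unfolding w_def by simp
      then have "fst c = fst c'" using cp by simp
      then have "c = c'" using True by (simp add: prod_eq_iff)
      then show False using ne by simp
    next
      case False
      then have "w = 3" unfolding w_def by simp
      then show False using cp False by simp
    qed
  qed
  then show ?thesis using mem by blast
qed


lemma permutes_iff_bij: "(\<sigma>::4\<Rightarrow>4) permutes UNIV \<longleftrightarrow> bij \<sigma>"
proof
  assume "\<sigma> permutes UNIV" then show "bij \<sigma>" by (rule permutes_bij)
next
  assume "bij \<sigma>" then show "\<sigma> permutes UNIV" by (intro bij_imp_permutes) auto
qed

lemma card_cls: "card (UNIV :: cls set) = 8"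
proof -
  have e: "(UNIV :: cls set) = (UNIV :: bool set) \<times> ((UNIV :: bool set) \<times> (UNIV :: bool set))" by simp
  have "card (UNIV :: cls set) = card (UNIV :: bool set) * (card (UNIV :: bool set) * card (UNIV :: bool set))"
    by (subst e) (simp only: card_cartesian_product)
  then show ?thesis by (simp add: card_UNIV_bool)
qed

lemma card_perms4: "card {\<sigma>::4\<Rightarrow>4. \<sigma> permutes UNIV} = 24"
proof -
  have "card (UNIV :: 4 set) = 4" by simp
  then have "card {\<sigma>::4\<Rightarrow>4. \<sigma> permutes UNIV} = fact 4" by (intro card_permutations) auto
  then show ?thesis by (simp add: fact_numeral)
qed

theorem theorem5p1:
  fixes g :: int
  assumes "g \<ge> 1"
  shows "card {P. \<exists>D. oo_descartes D \<and> strongly_integral D \<and> divisor D = g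
                   \<and> P = super_packing D} = 8
       \<and> (\<exists>Orbs. finite Orbs \<and> card Orbs = 384
              \<and> (\<forall>X\<in>Orbs. \<exists>D. oo_descartes D \<and> X = superA_orbit D)
              \<and> \<Union>Orbs = {D. oo_descartes D \<and> strongly_integral D \<and> divisor D = g})"
proof -
  note g = assms
  define Pset where "Pset = {\<sigma>::4\<Rightarrow>4. \<sigma> permutes UNIV}"
  define I where "I = (UNIV :: cls set) \<times> Pset \<times> (UNIV :: bool set)"
  define f where "f = (\<lambda>(c, \<sigma>, e). superA_orbit (rep g c \<sigma> e))"
  define Orbs where "Orbs = f ` I"
  have Pb: "\<And>\<sigma>. \<sigma> \<in> Pset \<longleftrightarrow> bij \<sigma>" unfolding Pset_def using permutes_iff_bij by blast
  have finI: "finite I" unfolding I_def Pset_def by (intro finite_cartesian_product finite_permutations) auto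
  have cardI: "card I = 384" unfolding I_def Pset_def
    by (simp only: card_cartesian_product card_cls card_perms4 card_UNIV_bool)
  have inj: "inj_on f I"
  proof (rule inj_onI)
    fix x y assume x: "x \<in> I" and y: "y \<in> I" and fxy: "f x = f y"
    obtain c \<sigma> e where xe: "x = (c, \<sigma>, e)" by (cases x) auto
    obtain c' \<sigma>' e' where ye: "y = (c', \<sigma>', e')" by (cases y) auto
    have s: "bij \<sigma>" "bij \<sigma>'" using x y xe ye Pb unfolding I_def by auto
    have "rep g c \<sigma> e \<in> superA_orbit (rep g c \<sigma> e)" by (rule self_orbit[OF oo_rep[OF g s(1)]])
    then have "rep g c \<sigma> e \<in> superA_orbit (rep g c' \<sigma>' e')" using fxy xe ye unfolding f_def by simp
    then obtain U where U: "U \<in> G0" "U ** W_mat (rep g c' \<sigma>' e') = W_mat (rep g c \<sigma> e)"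
      using orbit_eqv unfolding eqv_def by blast
    have cc: "c' = c" using rep_distinct_c[OF g s(2) s(1) U] .
    have "\<sigma>' = \<sigma> \<and> e' = e" using rep_distinct_se[OF g s(2) s(1) U(1)] U(2) cc by simp
    then show "x = y" using xe ye cc by simp
  qed
  define S where "S = {D. oo_descartes D \<and> strongly_integral D \<and> divisor D = g}"
  have U1: "\<Union>Orbs = S"
  proof
    show "\<Union>Orbs \<subseteq> S"
    proof
      fix D assume "D \<in> \<Union>Orbs"
      then obtain c \<sigma> e where h: "(c, \<sigma>, e) \<in> I" "D \<in> superA_orbit (rep g c \<sigma> e)"
        unfolding Orbs_def f_def by auto
      have "bij \<sigma>" using h(1) Pb unfolding I_def by auto
      then show "D \<in> S" using in_orbit_props[OF g _ h(2)] unfolding S_def by blast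
    qed
  next
    show "S \<subseteq> \<Union>Orbs"
    proof
      fix D assume "D \<in> S"
      then obtain c \<sigma> e where h: "bij \<sigma>" "D \<in> superA_orbit (rep g c \<sigma> e)"
        using cover[OF g] unfolding S_def by blast
      then have "(c, \<sigma>, e) \<in> I" using Pb unfolding I_def by auto
      then have "f (c, \<sigma>, e) \<in> Orbs" unfolding Orbs_def by blast
      moreover have "D \<in> f (c, \<sigma>, e)" using h(2) unfolding f_def by simp
      ultimately show "D \<in> \<Union>Orbs" by blast
    qed
  qed
  have part2: "finite Orbs \<and> card Orbs = 384 \<and> (\<forall>X\<in>Orbs. \<exists>D. oo_descartes D \<and> X = superA_orbit D) \<and> \<Union>Orbs = S"
  proof (intro conjI)
    show "finite Orbs" unfolding Orbs_def using finI by simp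
    show "card Orbs = 384" unfolding Orbs_def using card_image[OF inj] cardI by simp
    show "\<forall>X\<in>Orbs. \<exists>D. oo_descartes D \<and> X = superA_orbit D"
    proof
      fix X assume "X \<in> Orbs"
      then obtain c \<sigma> e where h: "(c, \<sigma>, e) \<in> I" "X = superA_orbit (rep g c \<sigma> e)"
        unfolding Orbs_def f_def by auto
      have "bij \<sigma>" using h(1) Pb unfolding I_def by auto
      then show "\<exists>D. oo_descartes D \<and> X = superA_orbit D" using oo_rep[OF g] h(2) by blast
    qed
    show "\<Union>Orbs = S" by (rule U1)
  qed
  have Peq: "{P. \<exists>D. oo_descartes D \<and> strongly_integral D \<and> divisor D = g \<and> P = super_packing D}
      = (\<lambda>c. super_packing (baseC g c)) ` UNIV"
  proof
    show "{P. \<exists>D. oo_descartes D \<and> strongly_integral D \<and> divisor D = g \<and> P = super_packing D}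
      \<subseteq> (\<lambda>c. super_packing (baseC g c)) ` UNIV"
    proof
      fix P assume "P \<in> {P. \<exists>D. oo_descartes D \<and> strongly_integral D \<and> divisor D = g \<and> P = super_packing D}"
      then obtain D where D: "oo_descartes D" "strongly_integral D" "divisor D = g" "P = super_packing D" by blast
      obtain c \<sigma> e where h: "bij \<sigma>" "D \<in> superA_orbit (rep g c \<sigma> e)" using cover[OF g D(1-3)] by blast
      have "P = super_packing (baseC g c)" using D(4) sp_orbit[OF h(2)] sp_rep[OF h(1)] by simp
      then show "P \<in> (\<lambda>c. super_packing (baseC g c)) ` UNIV" by blast
    qed
  next
    show "(\<lambda>c. super_packing (baseC g c)) ` UNIV
      \<subseteq> {P. \<exists>D. oo_descartes D \<and> strongly_integral D \<and> divisor D = g \<and> P = super_packing D}"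
    proof
      fix P assume "P \<in> (\<lambda>c. super_packing (baseC g c)) ` UNIV"
      then obtain c where c: "P = super_packing (baseC g c)" by blast
      have R: "rep g c id True \<in> superA_orbit (rep g c id True)" by (rule self_orbit[OF oo_rep[OF g bij_id]])
      have props: "oo_descartes (rep g c id True) \<and> strongly_integral (rep g c id True) \<and> divisor (rep g c id True) = g"
        by (rule in_orbit_props[OF g bij_id R])
      have "super_packing (rep g c id True) = super_packing (baseC g c)" by (rule sp_rep[OF bij_id])
      then show "P \<in> {P. \<exists>D. oo_descartes D \<and> strongly_integral D \<and> divisor D = g \<and> P = super_packing D}"
        using props c by auto
    qed
  qed
  have injP: "inj (\<lambda>c. super_packing (baseC g c))"
    by (rule injI) (use sp_distinct[OF g] in blast)
  have part1: "card {P. \<exists>D. oo_descartes D \<and> strongly_integral D \<and> divisor D = g \<and> P = super_packing D} = 8"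
  proof -
    have "card ((\<lambda>c. super_packing (baseC g c)) ` (UNIV :: cls set)) = card (UNIV :: cls set)"
      by (rule card_image[OF injP])
    then show ?thesis unfolding Peq card_cls .
  qed
  have part2': "\<exists>Orbs. finite Orbs \<and> card Orbs = 384
              \<and> (\<forall>X\<in>Orbs. \<exists>D. oo_descartes D \<and> X = superA_orbit D)
              \<and> \<Union>Orbs = {D. oo_descartes D \<and> strongly_integral D \<and> divisor D = g}"
    by (rule exI[of _ Orbs]) (rule part2[unfolded S_def])
  show ?thesis by (rule conjI[OF part1 part2'])
qed


end
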